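(* Let $\omega$ be sufficiently small. Let $\mu_j^{\pm} = \pm i \sqrt{\nu_j}$ be the eigenvalues of $A$ with corresponding eigenvectors $V_j^{\pm} = (v_j, - \mu_j^{\pm}v_j)^T$, where $(\nu_j, v_j)$ is the explicit eigensystem of $T_\omega$. The eigenvalues $\xi_j$ of $T_\omega+P$ then satisfy $$ |\xi_j - \nu_j| \sim \omega |v_j(1)|^2,\ j \in [N]$$ and interlace $\xi_1<\nu_1<\xi_2<\nu_2<\dots<\xi_N<\nu_N$ with associated eigenvectors $$w_j = \frac{1}{\sqrt{\sum_{k=1}^N \frac{|v_k(1)|^2}{(\nu_k - \xi_j)^2} } } \left( \sum_{k=1}^N \frac{|v_k(1)|^2}{(\nu_k - \xi_j)}, \sum_{k=1}^N \frac{v_k(1)v_k(2)}{(\nu_k - \xi_j)}, \dots, \sum_{k=1}^N \frac{ v_k(1)v_k(N)}{(\nu_k - \xi_j)} \right)^T.$$ In particular it holds $|w_j(1)|^2 \sim |v_j(1)|^2$. Consequently the eigensystem of $A_\omega$ is $\left(\pm i \sqrt{\xi_j}, W_j^{\pm}\right)$, with $W_j^{\pm} = \left(w_j, \mp i \sqrt{\xi_j} w_j \right)^T,\ j \in [N].$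
   Context: Dirichlet boundary conditions: $\mathscr V_1$ is the $N\times N$ discrete Dirichlet Laplacian (tridiagonal, $2$ on the diagonal, $-1$ off the diagonal) with eigenvalues $\lambda_j = 4\sin^2(\frac{\pi j}{2(N+1)})$ and eigenvectors $v_j(i)=\sqrt{\frac{2}{N+1}}\sin(\frac{ij\pi}{N+1})$. For next-to-nearest-neighbour coupling $\omega$ and pinning $\eta$, $T_\omega = (1+4\omega)\mathscr V_1 - \omega \mathscr V_1^2 + \eta \operatorname{Id}$, with eigenvectors $v_j$ and eigenvalues $\nu_j = (1+4\omega)\lambda_j - \omega\lambda_j^2 + \eta$. $P=\operatorname{diag}(-2\omega,0,\dots,0)$ (rank one), $A=\begin{pmatrix}0&-I\\ T_\omega & 0\end{pmatrix}$ and $A_\omega = \begin{pmatrix}0&-I\\ T_\omega+P & 0\end{pmatrix}$. *)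

theory Defs
  imports "Jordan_Normal_Form.Char_Poly"
begin

text \<open>Matrices/vectors are Jordan_Normal_Form matrices/vectors with
  0-based storage; the paper's 1-based component i corresponds to storage index i-1.
  Eigen-indices j range over 1..N as in the paper.\<close>

definition lapD :: "nat \<Rightarrow> real mat" where
  "lapD N = mat N N (\<lambda>(i,k). if i = k then 2 else if i = k + 1 \<or> k = i + 1 then -1 else 0)"

definition lamD :: "nat \<Rightarrow> nat \<Rightarrow> real" where
  "lamD N j = 4 * (sin (pi * real j / (2 * (real N + 1))))\<^sup>2"

definition vD :: "nat \<Rightarrow> nat \<Rightarrow> nat \<Rightarrow> real" where
  "vD N j i = sqrt (2 / (real N + 1)) * sin (real i * real j * pi / (real N + 1))"

definition vvec :: "nat \<Rightarrow> nat \<Rightarrow> real vec" where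
  "vvec N j = vec N (\<lambda>i. vD N j (i + 1))"

definition Tom :: "nat \<Rightarrow> real \<Rightarrow> real \<Rightarrow> real mat" where
  "Tom N \<omega> \<eta> = (1 + 4 * \<omega>) \<cdot>\<^sub>m lapD N - \<omega> \<cdot>\<^sub>m (lapD N * lapD N) + \<eta> \<cdot>\<^sub>m 1\<^sub>m N"

definition nuT :: "nat \<Rightarrow> real \<Rightarrow> real \<Rightarrow> nat \<Rightarrow> real" where
  "nuT N \<omega> \<eta> j = (1 + 4 * \<omega>) * lamD N j - \<omega> * (lamD N j)\<^sup>2 + \<eta>"

definition Pmat :: "nat \<Rightarrow> real \<Rightarrow> real mat" where
  "Pmat N \<omega> = mat N N (\<lambda>(i,k). if i = 0 \<and> k = 0 then -2 * \<omega> else 0)"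

definition Amat :: "nat \<Rightarrow> real \<Rightarrow> real \<Rightarrow> complex mat" where
  "Amat N \<omega> \<eta> = four_block_mat (0\<^sub>m N N) (- 1\<^sub>m N) (map_mat complex_of_real (Tom N \<omega> \<eta>)) (0\<^sub>m N N)"

definition Aom :: "nat \<Rightarrow> real \<Rightarrow> real \<Rightarrow> complex mat" where
  "Aom N \<omega> \<eta> = four_block_mat (0\<^sub>m N N) (- 1\<^sub>m N)
      (map_mat complex_of_real (Tom N \<omega> \<eta> + Pmat N \<omega>)) (0\<^sub>m N N)"

text \<open>The vector w_j of the paper, as a function of the value xi = xi_j:
  w(i) = (sum_k v_k(1) v_k(i) / (nu_k - xi)) / sqrt (sum_k |v_k(1)|^2 / (nu_k - xi)^2).\<close>
definition wvec :: "nat \<Rightarrow> real \<Rightarrow> real \<Rightarrow> real \<Rightarrow> real vec" where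
  "wvec N \<omega> \<eta> x = vec N (\<lambda>i.
      (\<Sum>k=1..N. vD N k 1 * vD N k (i + 1) / (nuT N \<omega> \<eta> k - x))
      / sqrt (\<Sum>k=1..N. (vD N k 1)\<^sup>2 / (nuT N \<omega> \<eta> k - x)\<^sup>2))"

definition stackv :: "real vec \<Rightarrow> complex \<Rightarrow> complex vec" where
  "stackv u s = map_vec complex_of_real u @\<^sub>v (s \<cdot>\<^sub>v map_vec complex_of_real u)"

end

theory Submission
  imports Defs
begin

lemma cos_sum_tele:
  fixes a :: real
  shows "2 * sin (a/2) * (\<Sum>i=1..n. cos (real i * a)) = sin ((real n + 1/2) * a) - sin (a/2)"
proof (induction n)
  case 0 then show ?case by simp
next
  case (Suc n)
  have e1: "((real n + 3/2) * a - (real n + 1/2) * a) / 2 = a/2" by (simp add: field_simps)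
  have e2: "((real n + 3/2) * a + (real n + 1/2) * a) / 2 = (real n + 1) * a" by (simp add: field_simps)
  have "sin ((real n + 3/2) * a) - sin ((real n + 1/2) * a) = 2 * sin (a/2) * cos ((real n + 1) * a)"
    unfolding sin_diff_sin e1 e2 by simp
  then show ?case using Suc by (simp add: distrib_left field_simps)
qed

lemma cos_sum_closed:
  fixes N m :: nat
  assumes "0 < m" "m < 2 * N + 2"
  shows "(\<Sum>i=1..N. cos (real i * (real m * pi / (real N + 1)))) = - (1 + (-1)^m) / 2"
proof -
  define a where "a = real m * pi / (real N + 1)"
  have "real m < 2 * real N + 2" using assms by linarith
  then have "real m * pi < (2 * real N + 2) * pi" by simp
  then have a2: "0 < a/2" "a/2 < pi" using assms by (auto simp: a_def field_simps)
  have s: "sin (a/2) > 0" using sin_gt_zero[OF a2] .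
  have e: "(real N + 1/2) * a = real m * pi - a/2" by (simp add: a_def field_simps)
  have "sin ((real N + 1/2) * a) = - ((-1)^m) * sin (a/2)"
    unfolding e sin_diff by simp
  then have "2 * sin (a/2) * (\<Sum>i=1..N. cos (real i * a)) = 2 * sin (a/2) * (- (1 + (-1)^m) / 2)"
    using cos_sum_tele[of a N] by (simp add: algebra_simps)
  then show ?thesis using s unfolding a_def[symmetric] by simp
qed

lemma vD_sq: "sqrt (2 / (real N + 1)) ^ 2 = 2 / (real N + 1)"
  by simp

lemma vD_sym: "vD N j i = vD N i j"
  unfolding vD_def by (simp add: mult.commute)

lemma orth:
  assumes j: "j \<in> {1..N}" and k: "k \<in> {1..N}"
  shows "(\<Sum>i=1..N. vD N j i * vD N k i) = (if j = k then 1 else 0)"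
proof -
  define M where "M = real N + 1"
  have M: "M > 0" by (simp add: M_def)
  define d where "d = (if j \<ge> k then j - k else k - j)"
  have trm: "vD N j i * vD N k i = (cos (real i * (real d * pi / M))
      - cos (real i * (real (j + k) * pi / M))) / M" for i
  proof -
    have sq: "sqrt (2 / M) * sqrt (2 / M) = 2 / M" using M by simp
    have "vD N j i * vD N k i = (sqrt (2 / M) * sqrt (2 / M)) * (sin (real i * real j * pi / M) * sin (real i * real k * pi / M))"
      unfolding vD_def M_def[symmetric] by (simp only: mult_ac)
    also have "\<dots> = (2 / M) * (sin (real i * real j * pi / M) * sin (real i * real k * pi / M))"
      by (simp only: sq)
    also have "\<dots> = (cos (real i * real j * pi / M - real i * real k * pi / M) - cos (real i * real j * pi / M + real i * real k * pi / M)) / M"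
      unfolding sin_times_sin using M by (simp add: field_simps)
    also have "cos (real i * real j * pi / M - real i * real k * pi / M) = cos (real i * (real d * pi / M))"
    proof (cases "k \<le> j")
      case True
      have "real i * real j * pi / M - real i * real k * pi / M = real i * (real d * pi / M)"
        using True by (simp add: d_def of_nat_diff diff_divide_distrib right_diff_distrib left_diff_distrib)
      then show ?thesis by simp
    next
      case False
      have "real i * real k * pi / M - real i * real j * pi / M = real i * (real d * pi / M)"
        using False by (simp add: d_def of_nat_diff diff_divide_distrib right_diff_distrib left_diff_distrib)
      then show ?thesis by (metis cos_minus minus_diff_eq)
    qed
    also have "real i * real j * pi / M + real i * real k * pi / M = real i * (real (j + k) * pi / M)"
      by (simp add: distrib_left distrib_right add_divide_distrib)
    finally show ?thesis .
  qed
  have "(\<Sum>i=1..N. vD N j i * vD N k i) = ((\<Sum>i=1..N. cos (real i * (real d * pi / M)))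
      - (\<Sum>i=1..N. cos (real i * (real (j + k) * pi / M)))) / M"
    unfolding trm sum_divide_distrib[symmetric] sum_subtractf by simp
  also have "\<dots> = (if j = k then 1 else 0)"
  proof (cases "j = k")
    case True
    have "(\<Sum>i=1..N. cos (real i * (real (j + k) * pi / M))) = - (1 + (-1)^(j+k)) / 2"
      unfolding M_def using j k by (intro cos_sum_closed) auto
    moreover have "(-1::real)^(j+k) = 1" using True by (simp flip: mult_2)
    moreover have "d = 0" using True by (simp add: d_def)
    ultimately show ?thesis using True M by (simp add: M_def)
  next
    case False
    have d: "0 < d" "d < 2 * N + 2" using False j k by (auto simp: d_def)
    have "(\<Sum>i=1..N. cos (real i * (real (j + k) * pi / M))) = - (1 + (-1)^(j+k)) / 2"
      unfolding M_def using j k by (intro cos_sum_closed) auto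
    moreover have "(\<Sum>i=1..N. cos (real i * (real d * pi / M))) = - (1 + (-1)^d) / 2"
      unfolding M_def using d by (intro cos_sum_closed) auto
    moreover have "(-1::real)^(j+k) = (-1)^d"
    proof -
      have "j + k = d + 2 * min j k" by (auto simp: d_def)
      then show ?thesis by (simp add: power_add power_mult)
    qed
    ultimately show ?thesis using False by simp
  qed
  finally show ?thesis .
qed

lemma smult_mv: "A \<in> carrier_mat n m \<Longrightarrow> v \<in> carrier_vec m \<Longrightarrow> (a \<cdot>\<^sub>m A) *\<^sub>v v = a \<cdot>\<^sub>v (A *\<^sub>v v)"
  by (intro eq_vecI) (auto simp: scalar_prod_def sum_distrib_left mult.assoc)

lemma lapD_carrier[simp]: "lapD N \<in> carrier_mat N N" by (simp add: lapD_def)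
lemma dim_lapD[simp]: "dim_row (lapD N) = N" "dim_col (lapD N) = N" by (simp_all add: lapD_def)
lemma Pmat_carrier[simp]: "Pmat N w \<in> carrier_mat N N" by (simp add: Pmat_def)
lemma Tom_carrier[simp]: "Tom N w e \<in> carrier_mat N N" by (simp add: Tom_def)
lemma vvec_carrier[simp]: "vvec N k \<in> carrier_vec N" by (simp add: vvec_def)

lemma Tom_mv:
  assumes x: "x \<in> carrier_vec N"
  shows "Tom N w e *\<^sub>v x = (1 + 4 * w) \<cdot>\<^sub>v (lapD N *\<^sub>v x) - w \<cdot>\<^sub>v (lapD N *\<^sub>v (lapD N *\<^sub>v x)) + e \<cdot>\<^sub>v x"
proof -
  have c: "(1 + 4 * w) \<cdot>\<^sub>m lapD N \<in> carrier_mat N N" "w \<cdot>\<^sub>m (lapD N * lapD N) \<in> carrier_mat N N"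
    "e \<cdot>\<^sub>m 1\<^sub>m N \<in> carrier_mat N N" "lapD N * lapD N \<in> carrier_mat N N"
    using mult_carrier_mat[OF lapD_carrier lapD_carrier, of N] by auto
  have "Tom N w e *\<^sub>v x = ((1 + 4 * w) \<cdot>\<^sub>m lapD N - w \<cdot>\<^sub>m (lapD N * lapD N)) *\<^sub>v x + (e \<cdot>\<^sub>m 1\<^sub>m N) *\<^sub>v x"
    unfolding Tom_def by (rule add_mult_distrib_mat_vec[OF _ c(3) x]) (rule minus_carrier_mat[OF c(2)])
  also have "((1 + 4 * w) \<cdot>\<^sub>m lapD N - w \<cdot>\<^sub>m (lapD N * lapD N)) *\<^sub>v x
     = ((1 + 4 * w) \<cdot>\<^sub>m lapD N) *\<^sub>v x - (w \<cdot>\<^sub>m (lapD N * lapD N)) *\<^sub>v x"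
    by (rule minus_mult_distrib_mat_vec[OF c(1,2) x])
  also have "((1 + 4 * w) \<cdot>\<^sub>m lapD N) *\<^sub>v x = (1 + 4 * w) \<cdot>\<^sub>v (lapD N *\<^sub>v x)"
    by (rule smult_mv[OF lapD_carrier x])
  also have "(w \<cdot>\<^sub>m (lapD N * lapD N)) *\<^sub>v x = w \<cdot>\<^sub>v ((lapD N * lapD N) *\<^sub>v x)"
    by (rule smult_mv[OF c(4) x])
  also have "(lapD N * lapD N) *\<^sub>v x = lapD N *\<^sub>v (lapD N *\<^sub>v x)"
    by (rule assoc_mult_mat_vec[OF lapD_carrier lapD_carrier x])
  also have "(e \<cdot>\<^sub>m 1\<^sub>m N) *\<^sub>v x = e \<cdot>\<^sub>v x"
    using smult_mv[of "1\<^sub>m N" N N x e] x by simp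
  finally show ?thesis .
qed

lemma lapD_entry:
  assumes x: "x \<in> carrier_vec N" and i: "i < N"
  shows "(lapD N *\<^sub>v x) $ i = 2 * x $ i - (if 0 < i then x $ (i - 1) else 0) - (if i + 1 < N then x $ (i + 1) else 0)"
proof -
  have "(lapD N *\<^sub>v x) $ i = (\<Sum>l\<in>{0..<N}. (if i = l then 2 else if i = l + 1 \<or> l = i + 1 then -1 else 0) * x $ l)"
    using x i by (simp add: lapD_def scalar_prod_def)
  also have "\<dots> = (\<Sum>l\<in>{0..<N}. (if l = i then 2 * x $ i else 0) - (if 0 < i then (if l = i - 1 then x $ (i - 1) else 0) else 0)
       - (if l = i + 1 then x $ (i + 1) else 0))"
    by (rule sum.cong) auto
  also have "\<dots> = 2 * x $ i - (if 0 < i then x $ (i - 1) else 0) - (if i + 1 < N then x $ (i + 1) else 0)"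
    using i by (simp add: sum_subtractf sum.delta')
  finally show ?thesis .
qed

lemma lamD_cos: "lamD N k = 2 - 2 * cos (real k * pi / (real N + 1))"
proof -
  have ar: "real k * pi / (real N + 1) = 2 * (pi * real k / (2 * (real N + 1)))"
    by (simp add: field_simps)
  have "cos (real k * pi / (real N + 1)) = cos (2 * (pi * real k / (2 * (real N + 1))))"
    by (subst ar) (rule refl)
  also have "\<dots> = 1 - 2 * (sin (pi * real k / (2 * (real N + 1))))\<^sup>2" by (rule cos_double_sin)
  finally show ?thesis unfolding lamD_def by simp
qed

lemma vD_0[simp]: "vD N k 0 = 0" by (simp add: vD_def)
lemma vD_end: "vD N k (N + 1) = 0"
proof -
  have "real (N + 1) * real k * pi / (real N + 1) = real k * pi" by (simp add: field_simps)
  then show ?thesis by (simp add: vD_def del: of_nat_Suc)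
qed

lemma vD_rec:
  assumes "1 \<le> i"
  shows "vD N k (i - 1) + vD N k (i + 1) = (2 - lamD N k) * vD N k i"
proof -
  define x where "x = real k * pi / (real N + 1)"
  have i1: "real (i - 1) = real i - 1" using assms by (simp add: of_nat_diff)
  have a: "real (i - 1) * real k * pi / (real N + 1) = real i * x - x"
    unfolding i1 x_def by (simp add: left_diff_distrib diff_divide_distrib)
  have b: "real (i + 1) * real k * pi / (real N + 1) = real i * x + x"
    unfolding x_def by (simp add: distrib_right add_divide_distrib)
  have c: "real i * real k * pi / (real N + 1) = real i * x" by (simp add: x_def)
  have h: "sin (real i * x - x) + sin (real i * x + x) = 2 * cos x * sin (real i * x)"
    by (simp add: sin_diff sin_add)
  define s where "s = sqrt (2 / (real N + 1))"
  have "s * sin (real i * x - x) + s * sin (real i * x + x) = s * (sin (real i * x - x) + sin (real i * x + x))"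
    by (simp add: distrib_left)
  also have "\<dots> = s * (2 * cos x * sin (real i * x))" by (simp only: h)
  also have "\<dots> = (2 - (2 - 2 * cos x)) * (s * sin (real i * x))" by simp
  finally show ?thesis unfolding vD_def a b c lamD_cos x_def[symmetric] s_def[symmetric] .
qed

lemma lapD_vvec: "lapD N *\<^sub>v vvec N k = lamD N k \<cdot>\<^sub>v vvec N k"
proof (rule eq_vecI)
  fix i assume "i < dim_vec (lamD N k \<cdot>\<^sub>v vvec N k)"
  then have i: "i < N" by (simp add: vvec_def)
  have "(lapD N *\<^sub>v vvec N k) $ i = 2 * vD N k (i+1) - vD N k i - vD N k (i + 2)"
  proof -
    have "(if 0 < i then vvec N k $ (i - 1) else 0) = vD N k i" using i by (auto simp: vvec_def)
    moreover have "(if i + 1 < N then vvec N k $ (i + 1) else 0) = vD N k (i + 2)"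
    proof (cases "i + 1 < N")
      case False
      then have "i + 2 = N + 1" using i by simp
      then show ?thesis using False vD_end[of N k] by simp
    qed (simp add: vvec_def)
    ultimately show ?thesis using lapD_entry[OF vvec_carrier i] i by (simp add: vvec_def)
  qed
  also have "\<dots> = lamD N k * vD N k (i+1)" using vD_rec[of "i+1" N k] by (simp add: left_diff_distrib; linarith)
  finally show "(lapD N *\<^sub>v vvec N k) $ i = (lamD N k \<cdot>\<^sub>v vvec N k) $ i" using i by (simp add: vvec_def)
qed (simp add: vvec_def)

lemma Tom_vvec: "Tom N w e *\<^sub>v vvec N k = nuT N w e k \<cdot>\<^sub>v vvec N k"
  unfolding Tom_mv[OF vvec_carrier] lapD_vvec mult_mat_vec[OF lapD_carrier vvec_carrier]
  by (rule eq_vecI) (auto simp: vvec_def nuT_def power2_eq_square algebra_simps)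

lemma transpose_smult': "transpose_mat (a \<cdot>\<^sub>m A) = a \<cdot>\<^sub>m transpose_mat A"
  by (intro eq_matI) auto

lemma lapD_sym: "transpose_mat (lapD N) = lapD N"
  by (intro eq_matI) (auto simp: lapD_def)

lemma Pmat_sym: "transpose_mat (Pmat N w) = Pmat N w"
  by (intro eq_matI) (auto simp: Pmat_def)

lemma Tom_sym: "transpose_mat (Tom N w e) = Tom N w e"
proof -
  have c: "(1 + 4 * w) \<cdot>\<^sub>m lapD N \<in> carrier_mat N N" "w \<cdot>\<^sub>m (lapD N * lapD N) \<in> carrier_mat N N"
    "e \<cdot>\<^sub>m 1\<^sub>m N \<in> carrier_mat N N" "lapD N * lapD N \<in> carrier_mat N N"
    using mult_carrier_mat[OF lapD_carrier lapD_carrier, of N] by auto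
  have d: "(1 + 4 * w) \<cdot>\<^sub>m lapD N - w \<cdot>\<^sub>m (lapD N * lapD N) \<in> carrier_mat N N"
    by (rule minus_carrier_mat[OF c(2)])
  show ?thesis unfolding Tom_def
    by (simp add: transpose_add[OF d c(3)] transpose_minus[OF c(1,2)] transpose_smult'
        transpose_mult[OF lapD_carrier lapD_carrier] lapD_sym)
qed

lemma sym_eig:
  fixes A :: "'a::comm_ring_1 mat"
  assumes "transpose_mat A = A" "A \<in> carrier_mat n n" "v \<in> carrier_vec n" "u \<in> carrier_vec n"
    "A *\<^sub>v v = c \<cdot>\<^sub>v v"
  shows "v \<bullet> (A *\<^sub>v u) = c * (v \<bullet> u)"
proof -
  have "v \<bullet> (A *\<^sub>v u) = (transpose_mat A *\<^sub>v v) \<bullet> u"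
    using transpose_vec_mult_scalar[OF assms(2,4,3)] by simp
  also have "\<dots> = c * (v \<bullet> u)" using assms by simp
  finally show ?thesis .
qed

lemma orth':
  assumes "i \<in> {1..N}" "l \<in> {1..N}"
  shows "(\<Sum>k=1..N. vD N k i * vD N k l) = (if i = l then 1 else 0)"
  using orth[OF assms] by (simp add: vD_sym[of N _ i] vD_sym[of N _ l])

lemma expand:
  fixes u :: "'a::real_field vec"
  assumes u: "u \<in> carrier_vec N" and i: "i < N"
  shows "u $ i = (\<Sum>k=1..N. (map_vec of_real (vvec N k) \<bullet> u) * of_real (vD N k (i+1)))"
proof -
  have "(\<Sum>k=1..N. (map_vec of_real (vvec N k) \<bullet> u) * of_real (vD N k (i+1)))
     = (\<Sum>k=1..N. \<Sum>l<N. of_real (vD N k (l+1)) * u $ l * of_real (vD N k (i+1)))"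
    using u by (simp add: scalar_prod_def vvec_def sum_distrib_right atLeast0LessThan)
  also have "\<dots> = (\<Sum>l<N. u $ l * of_real (\<Sum>k=1..N. vD N k (l+1) * vD N k (i+1)))"
    by (subst sum.swap) (simp add: sum_distrib_left mult_ac)
  also have "\<dots> = (\<Sum>l<N. if l = i then u $ i else 0)"
  proof (intro sum.cong refl)
    fix l assume "l \<in> {..<N}"
    then have "(\<Sum>k=1..N. vD N k (l+1) * vD N k (i+1)) = (if l = i then 1 else 0)"
      using i orth'[of "l+1" N "i+1"] by simp
    then show "u $ l * of_real (\<Sum>k=1..N. vD N k (l+1) * vD N k (i+1)) = (if l = i then u $ i else 0)"
      by simp
  qed
  also have "\<dots> = u $ i" using i by simp
  finally show ?thesis by simp
qed

lemma comb_mv: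
  assumes A: "A \<in> carrier_mat N N" and ev: "\<And>k. k \<in> {1..N} \<Longrightarrow> A *\<^sub>v vvec N k = mu k \<cdot>\<^sub>v vvec N k"
  shows "A *\<^sub>v vec N (\<lambda>i. \<Sum>k=1..N. b k * vD N k (i+1)) = vec N (\<lambda>i. \<Sum>k=1..N. b k * mu k * vD N k (i+1))"
proof (rule eq_vecI)
  fix i assume "i < dim_vec (vec N (\<lambda>i. \<Sum>k=1..N. b k * mu k * vD N k (i+1)))"
  then have i: "i < N" by simp
  have "(A *\<^sub>v vec N (\<lambda>i. \<Sum>k=1..N. b k * vD N k (i+1))) $ i
      = (\<Sum>l<N. A $$ (i, l) * (\<Sum>k=1..N. b k * vD N k (l+1)))"
    using A i by (simp add: scalar_prod_def atLeast0LessThan)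
  also have "\<dots> = (\<Sum>k=1..N. b k * (\<Sum>l<N. A $$ (i, l) * vD N k (l+1)))"
    by (simp add: sum_distrib_left sum_distrib_right mult_ac) (rule sum.swap)
  also have "\<dots> = (\<Sum>k=1..N. b k * mu k * vD N k (i+1))"
  proof (rule sum.cong[OF refl])
    fix k assume k: "k \<in> {1..N}"
    have "(\<Sum>l<N. A $$ (i, l) * vD N k (l+1)) = (A *\<^sub>v vvec N k) $ i"
      using A i by (simp add: scalar_prod_def vvec_def atLeast0LessThan)
    also have "\<dots> = mu k * vD N k (i+1)" using ev[OF k] i by (simp add: vvec_def)
    finally show "b k * (\<Sum>l<N. A $$ (i, l) * vD N k (l+1)) = b k * mu k * vD N k (i+1)" by simp
  qed
  finally show "(A *\<^sub>v vec N (\<lambda>i. \<Sum>k=1..N. b k * vD N k (i+1))) $ i = vec N (\<lambda>i. \<Sum>k=1..N. b k * mu k * vD N k (i+1)) $ i"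
    using i by simp
qed (use A in simp)

definition pp :: "real \<Rightarrow> real \<Rightarrow> real \<Rightarrow> real" where
  "pp w e r = (1 + 4 * w) * r - w * r\<^sup>2 + e"

lemma nuT_pp: "nuT N w e k = pp w e (lamD N k)"
  by (simp add: nuT_def pp_def)

lemma pp_diff: "pp w e b - pp w e a = (b - a) * (1 + 4 * w - w * (a + b))"
  by (simp add: pp_def power2_eq_square algebra_simps)

lemma pp_strict:
  assumes "0 \<le> a" "a < b" "b \<le> 4" "0 \<le> w" "w < 1/4"
  shows "pp w e a < pp w e b"
proof -
  have "w * (a + b) \<le> w * 8" using assms by (intro mult_left_mono) auto
  then have "0 < 1 + 4 * w - w * (a + b)" using assms by linarith
  then show ?thesis using pp_diff[of w e b a] assms by (smt (verit) mult_pos_pos)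
qed

lemma ang_lt_pi:
  assumes "k \<le> N"
  shows "real k * pi / (real N + 1) < pi"
proof -
  have "real k < real N + 1" using assms by linarith
  then have "real k * pi < (real N + 1) * pi" using pi_gt_zero by (rule mult_strict_right_mono)
  then show ?thesis by (simp add: divide_less_eq add_pos_pos)
qed

lemma lam_range: "0 \<le> lamD N k" "lamD N k \<le> 4"
proof -
  have "(sin (pi * real k / (2 * (real N + 1))))\<^sup>2 \<le> 1" by (simp add: sin_squared_eq)
  then show "0 \<le> lamD N k" "lamD N k \<le> 4" by (auto simp: lamD_def)
qed

lemma lam_strict:
  assumes "j < k" "k \<le> N"
  shows "lamD N j < lamD N k"
proof -
  have M: "real N + 1 > 0" by simp
  have "real k * pi / (real N + 1) \<le> pi" using ang_lt_pi[OF assms(2)] by simp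
  moreover have "real j * pi / (real N + 1) < real k * pi / (real N + 1)"
    using assms by (simp add: divide_strict_right_mono)
  ultimately have "cos (real k * pi / (real N + 1)) < cos (real j * pi / (real N + 1))"
    by (subst cos_mono_less_eq) auto
  then show ?thesis by (simp add: lamD_cos)
qed

lemma nu_strict:
  assumes "j < k" "k \<le> N" "0 \<le> w" "w < 1/4"
  shows "nuT N w e j < nuT N w e k"
  unfolding nuT_pp using assms lam_strict[OF assms(1,2)] lam_range
  by (intro pp_strict) auto

lemma nu_inj:
  assumes "j \<le> N" "k \<le> N" "0 \<le> w" "w < 1/4" "nuT N w e j = nuT N w e k"
  shows "j = k"
  using nu_strict[of j k N w e] nu_strict[of k j N w e] assms by (cases j k rule: linorder_cases) auto

lemma nu0: "nuT N w e 0 = e" by (simp add: nuT_def lamD_def)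

lemma nu_ge: "0 \<le> w \<Longrightarrow> w < 1/4 \<Longrightarrow> k \<le> N \<Longrightarrow> e \<le> nuT N w e k"
  using nu_strict[of 0 k N w e] nu0[of N w e] by (cases k) auto

lemma vD1_pos:
  assumes "k \<in> {1..N}"
  shows "0 < vD N k 1"
proof -
  have M: "real N + 1 > 0" by simp
  have "0 < real k * pi / (real N + 1)" using assms by auto
  moreover have "real k * pi / (real N + 1) < pi" using assms ang_lt_pi[of k N] by simp
  ultimately have "0 < sin (real k * pi / (real N + 1))" by (rule sin_gt_zero)
  then show ?thesis by (simp add: vD_def)
qed

lemma sum_a: "1 \<le> N \<Longrightarrow> (\<Sum>k=1..N. (vD N k 1)\<^sup>2) = 1"
  using orth'[of 1 N 1] by (simp add: power2_eq_square)

lemma dim_Pmat[simp]: "dim_row (Pmat N w) = N" "dim_col (Pmat N w) = N" by (simp_all add: Pmat_def)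
lemma dim_Tom[simp]: "dim_row (Tom N w e) = N" "dim_col (Tom N w e) = N" by (simp_all add: Tom_def)

abbreviation cv :: "nat \<Rightarrow> nat \<Rightarrow> complex vec" where
  "cv N k \<equiv> map_vec complex_of_real (vvec N k)"

lemma map_mat_add': "A \<in> carrier_mat n m \<Longrightarrow> B \<in> carrier_mat n m \<Longrightarrow>
   map_mat complex_of_real (A + B) = map_mat complex_of_real A + map_mat complex_of_real B"
  by (intro eq_matI) auto

lemma map_vec_smult': "map_vec complex_of_real (a \<cdot>\<^sub>v v) = complex_of_real a \<cdot>\<^sub>v map_vec complex_of_real v"
  by (intro eq_vecI) auto

lemma cTom_cv: "map_mat complex_of_real (Tom N w e) *\<^sub>v cv N k = complex_of_real (nuT N w e k) \<cdot>\<^sub>v cv N k"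
proof -
  have "map_vec complex_of_real (Tom N w e *\<^sub>v vvec N k) = map_mat complex_of_real (Tom N w e) *\<^sub>v cv N k"
    by (rule of_real_hom.mult_mat_vec_hom[OF Tom_carrier[of N w e] vvec_carrier[of N k]])
  then show ?thesis by (simp add: Tom_vvec map_vec_smult')
qed

lemma cP_mv:
  assumes u: "u \<in> carrier_vec N"
  shows "map_mat complex_of_real (Pmat N w) *\<^sub>v u = vec N (\<lambda>i. if i = 0 then complex_of_real (-2 * w) * u $ 0 else 0)"
proof (rule eq_vecI)
  fix i assume "i < dim_vec (vec N (\<lambda>i. if i = 0 then complex_of_real (-2 * w) * u $ 0 else 0))"
  then have i: "i < N" by simp
  have "(map_mat complex_of_real (Pmat N w) *\<^sub>v u) $ i =
      (\<Sum>l\<in>{0..<N}. complex_of_real (if i = 0 \<and> l = 0 then -2 * w else 0) * u $ l)"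
    using i u by (simp add: Pmat_def scalar_prod_def)
  also have "\<dots> = (\<Sum>l\<in>{0..<N}. if l = 0 then (if i = 0 then complex_of_real (-2 * w) * u $ 0 else 0) else 0)"
    by (rule sum.cong) auto
  also have "\<dots> = (if i = 0 then complex_of_real (-2 * w) * u $ 0 else 0)"
    using i by simp
  finally show "(map_mat complex_of_real (Pmat N w) *\<^sub>v u) $ i = vec N (\<lambda>i. if i = 0 then complex_of_real (-2 * w) * u $ 0 else 0) $ i"
    using i by simp
qed (simp add: Pmat_def)

lemma secular_C:
  assumes N: "1 \<le> N" and w: "0 < w" "w < 1/4"
    and ev: "eigenvector (map_mat complex_of_real (Tom N w e + Pmat N w)) u x"
  shows "x = complex_of_real (Re x) \<and> (\<forall>k\<in>{1..N}. Re x \<noteq> nuT N w e k)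
     \<and> 2 * w * (\<Sum>k=1..N. (vD N k 1)\<^sup>2 / (nuT N w e k - Re x)) = 1"
proof -
  define cT where "cT = map_mat complex_of_real (Tom N w e)"
  define cP where "cP = map_mat complex_of_real (Pmat N w)"
  have cTc: "cT \<in> carrier_mat N N" and cPc: "cP \<in> carrier_mat N N" by (auto simp: cT_def cP_def)
  have u: "u \<in> carrier_vec N" and u0: "u \<noteq> 0\<^sub>v N" and eq: "(cT + cP) *\<^sub>v u = x \<cdot>\<^sub>v u"
    using ev unfolding eigenvector_def cT_def cP_def
    by (auto simp: map_mat_add'[OF Tom_carrier Pmat_carrier])
  define c where "c k = cv N k \<bullet> u" for k
  define nu where "nu k = nuT N w e k" for k
  have cvc: "cv N k \<in> carrier_vec N" for k by simp
  have eqk: "complex_of_real (nu k) * c k - complex_of_real (2 * w * vD N k 1) * u $ 0 = x * c k"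
    if k: "k \<in> {1..N}" for k
  proof -
    have "cv N k \<bullet> ((cT + cP) *\<^sub>v u) = cv N k \<bullet> (cT *\<^sub>v u) + cv N k \<bullet> (cP *\<^sub>v u)"
      using add_mult_distrib_mat_vec[OF cTc cPc u] scalar_prod_add_distrib[OF cvc mult_mat_vec_carrier[OF cTc u] mult_mat_vec_carrier[OF cPc u]]
      by simp
    also have "cv N k \<bullet> (cT *\<^sub>v u) = complex_of_real (nu k) * c k"
      unfolding c_def nu_def cT_def
      by (rule sym_eig[OF _ _ cvc u]) (auto simp: map_mat_transpose Tom_sym cTom_cv)
    also have "cv N k \<bullet> (cP *\<^sub>v u) = (\<Sum>l\<in>{0..<N}. cv N k $ l * (if l = 0 then complex_of_real (-2 * w) * u $ 0 else 0))"
      unfolding cP_def cP_mv[OF u] by (simp add: scalar_prod_def vvec_def)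
    also have "\<dots> = cv N k $ 0 * (complex_of_real (-2 * w) * u $ 0)"
      using N by (simp add: if_distrib[of "\<lambda>t. _ * t"] cong: if_cong)
    also have "cv N k $ 0 = complex_of_real (vD N k 1)" using N by (simp add: vvec_def)
    finally have "cv N k \<bullet> ((cT + cP) *\<^sub>v u) = complex_of_real (nu k) * c k - complex_of_real (2 * w * vD N k 1) * u $ 0"
      by simp
    moreover have "cv N k \<bullet> ((cT + cP) *\<^sub>v u) = x * c k" unfolding eq c_def using u by simp
    ultimately show ?thesis by simp
  qed
  have exp: "u $ i = (\<Sum>k=1..N. c k * complex_of_real (vD N k (i+1)))" if "i < N" for i
    unfolding c_def using expand[OF u that] by simp
  have nuinj: "k = k'" if "k \<in> {1..N}" "k' \<in> {1..N}" "nu k = nu k'" for k k'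
    using nu_inj[of k N k' w e] that w unfolding nu_def by auto
  have ne0: "u $ 0 \<noteq> 0"
  proof
    assume z: "u $ 0 = 0"
    have ck: "(complex_of_real (nu k) - x) * c k = 0" if "k \<in> {1..N}" for k
      using eqk[OF that] z by (simp add: algebra_simps)
    obtain i where i: "i < N" "u $ i \<noteq> 0"
      using u u0 by (metis carrier_vecD eq_vecI index_zero_vec(1) index_zero_vec(2))
    have "\<exists>m\<in>{1..N}. c m \<noteq> 0"
    proof (rule ccontr)
      assume "\<not> (\<exists>m\<in>{1..N}. c m \<noteq> 0)"
      then have "\<forall>k\<in>{1..N}. c k = 0" by blast
      then have "u $ i = 0" using exp[OF i(1)] by simp
      then show False using i by simp
    qed
    then obtain m where m: "m \<in> {1..N}" "c m \<noteq> 0" by blast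
    have xm: "x = complex_of_real (nu m)" using ck[OF m(1)] m(2) by simp
    have ck0: "c k = 0" if "k \<in> {1..N}" "k \<noteq> m" for k
      using ck[OF that(1)] nuinj[OF that(1) m(1)] that(2) xm by auto
    have "(\<Sum>k=1..N. c k * complex_of_real (vD N k (0+1))) = (\<Sum>k=1..N. if k = m then c m * complex_of_real (vD N m 1) else 0)"
      by (rule sum.cong) (auto simp: ck0)
    also have "\<dots> = c m * complex_of_real (vD N m 1)" using m(1) by simp
    finally have "u $ 0 = c m * complex_of_real (vD N m 1)"
      using exp[of 0] N by simp
    moreover have "vD N m 1 \<noteq> 0" using vD1_pos[OF m(1)] by simp
    ultimately show False using z m(2) by simp
  qed
  have xne: "x \<noteq> complex_of_real (nu k)" if "k \<in> {1..N}" for k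
  proof
    assume "x = complex_of_real (nu k)"
    then have "complex_of_real (2 * w * vD N k 1) * u $ 0 = 0" using eqk[OF that] by simp
    then show False using ne0 w vD1_pos[OF that] by simp
  qed
  have ckv: "c k = complex_of_real (2 * w * vD N k 1) * u $ 0 / (complex_of_real (nu k) - x)" if "k \<in> {1..N}" for k
  proof -
    have "complex_of_real (nu k) - x \<noteq> 0" using xne[OF that] by simp
    then show ?thesis using eqk[OF that] by (simp add: field_simps)
  qed
  have "u $ 0 = (\<Sum>k=1..N. complex_of_real (2 * w * vD N k 1) * u $ 0 / (complex_of_real (nu k) - x) * complex_of_real (vD N k 1))"
    using exp[of 0] N ckv by simp
  also have "\<dots> = u $ 0 * (\<Sum>k=1..N. complex_of_real (2 * w * (vD N k 1)\<^sup>2) / (complex_of_real (nu k) - x))"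
    by (simp add: sum_distrib_left power2_eq_square mult_ac)
  finally have sec: "(\<Sum>k=1..N. complex_of_real (2 * w * (vD N k 1)\<^sup>2) / (complex_of_real (nu k) - x)) = 1"
    using ne0 by simp
  have imt: "Im (complex_of_real (2 * w * (vD N k 1)\<^sup>2) / (complex_of_real (nu k) - x))
      = Im x * (2 * w * (vD N k 1)\<^sup>2 / ((nu k - Re x)\<^sup>2 + (Im x)\<^sup>2))" for k
    by (simp add: Im_divide)
  have "Im x * (\<Sum>k=1..N. 2 * w * (vD N k 1)\<^sup>2 / ((nu k - Re x)\<^sup>2 + (Im x)\<^sup>2)) = 0"
  proof -
    have "Im (\<Sum>k=1..N. complex_of_real (2 * w * (vD N k 1)\<^sup>2) / (complex_of_real (nu k) - x)) = Im 1"
      by (simp only: sec)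
    then have "(\<Sum>k=1..N. Im (complex_of_real (2 * w * (vD N k 1)\<^sup>2) / (complex_of_real (nu k) - x))) = 0"
      by (simp only: Im_sum one_complex.sel)
    then show ?thesis by (simp only: imt sum_distrib_left[symmetric])
  qed
  moreover have "(\<Sum>k=1..N. 2 * w * (vD N k 1)\<^sup>2 / ((nu k - Re x)\<^sup>2 + (Im x)\<^sup>2)) > 0"
  proof -
    have "(\<Sum>k=1..N. 2 * w * (vD N k 1)\<^sup>2 / ((nu k - Re x)\<^sup>2 + (Im x)\<^sup>2))
        \<ge> 2 * w * (vD N 1 1)\<^sup>2 / ((nu 1 - Re x)\<^sup>2 + (Im x)\<^sup>2)"
      using N by (intro member_le_sum) (auto intro!: divide_nonneg_nonneg mult_nonneg_nonneg simp: w(1) less_imp_le)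
    moreover have "(nu 1 - Re x)\<^sup>2 + (Im x)\<^sup>2 > 0"
    proof -
      have "x \<noteq> complex_of_real (nu 1)" using xne N by simp
      then have "nu 1 - Re x \<noteq> 0 \<or> Im x \<noteq> 0" by (auto simp: complex_eq_iff)
      then show ?thesis by (auto simp: add_pos_nonneg add_nonneg_pos)
    qed
    moreover have "vD N 1 1 > 0" using vD1_pos[of 1 N] N by simp
    ultimately show ?thesis using w by (smt (verit) divide_pos_pos mult_pos_pos zero_less_power)
  qed
  ultimately have imx: "Im x = 0" by simp
  then have xr: "x = complex_of_real (Re x)" by (simp add: complex_eq_iff)
  have "complex_of_real (2 * w * (\<Sum>k=1..N. (vD N k 1)\<^sup>2 / (nu k - Re x))) = 1"
    using sec unfolding sum_distrib_left by (subst (asm) xr) (simp add: sum_distrib_left)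
  then have "2 * w * (\<Sum>k=1..N. (vD N k 1)\<^sup>2 / (nu k - Re x)) = 1"
    by (metis of_real_1 of_real_eq_iff)
  moreover have "\<forall>k\<in>{1..N}. Re x \<noteq> nu k" using xne xr by metis
  ultimately show ?thesis using xr unfolding nu_def by simp
qed

lemma P_mv:
  assumes u: "u \<in> carrier_vec N"
  shows "Pmat N w *\<^sub>v u = vec N (\<lambda>i. if i = 0 then (-2 * w) * u $ 0 else 0)"
proof (rule eq_vecI)
  fix i assume "i < dim_vec (vec N (\<lambda>i. if i = 0 then (-2 * w) * u $ 0 else 0))"
  then have i: "i < N" by simp
  have "(Pmat N w *\<^sub>v u) $ i = (\<Sum>l\<in>{0..<N}. (if i = 0 \<and> l = 0 then -2 * w else 0) * u $ l)"
    using i u by (simp add: Pmat_def scalar_prod_def)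
  also have "\<dots> = (\<Sum>l\<in>{0..<N}. if l = 0 then (if i = 0 then (-2 * w) * u $ 0 else 0) else 0)"
    by (rule sum.cong) auto
  also have "\<dots> = (if i = 0 then (-2 * w) * u $ 0 else 0)"
    using i by simp
  finally show "(Pmat N w *\<^sub>v u) $ i = vec N (\<lambda>i. if i = 0 then (-2 * w) * u $ 0 else 0) $ i"
    using i by simp
qed (simp add: Pmat_def)

lemma wvec_carrier[simp]: "wvec N w e x \<in> carrier_vec N" by (simp add: wvec_def)
lemma dim_wvec[simp]: "dim_vec (wvec N w e x) = N" by (simp add: wvec_def)

lemma wvec_eig:
  assumes N: "1 \<le> N" and w: "0 < w" "w < 1/4"
    and xne: "\<forall>k\<in>{1..N}. x \<noteq> nuT N w e k"
    and sec: "2 * w * (\<Sum>k=1..N. (vD N k 1)\<^sup>2 / (nuT N w e k - x)) = 1"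
  shows "eigenvector (Tom N w e + Pmat N w) (wvec N w e x) x"
    and "wvec N w e x $ 0 = 1 / (2 * w) / sqrt (\<Sum>k=1..N. (vD N k 1)\<^sup>2 / (nuT N w e k - x)\<^sup>2)"
proof -
  define nu where "nu k = nuT N w e k" for k
  define S2 where "S2 = (\<Sum>k=1..N. (vD N k 1)\<^sup>2 / (nu k - x)\<^sup>2)"
  define s where "s = sqrt S2"
  define b where "b k = vD N k 1 / (nu k - x) / s" for k
  have S2pos: "S2 > 0"
  proof -
    have "S2 \<ge> (vD N 1 1)\<^sup>2 / (nu 1 - x)\<^sup>2"
      unfolding S2_def using N by (intro member_le_sum) auto
    moreover have "(vD N 1 1)\<^sup>2 / (nu 1 - x)\<^sup>2 > 0"
    proof -
      have "nu 1 - x \<noteq> 0" using xne N unfolding nu_def by auto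
      then show ?thesis using vD1_pos[of 1 N] N by simp
    qed
    ultimately show ?thesis by linarith
  qed
  have spos: "s > 0" using S2pos by (simp add: s_def)
  have wv: "wvec N w e x = vec N (\<lambda>i. \<Sum>k=1..N. b k * vD N k (i+1))"
    unfolding wvec_def b_def s_def S2_def nu_def
    by (intro eq_vecI) (auto simp: sum_divide_distrib intro!: sum.cong)
  have w0: "wvec N w e x $ 0 = 1 / (2 * w) / s"
  proof -
    have "wvec N w e x $ 0 = (\<Sum>k=1..N. (vD N k 1)\<^sup>2 / (nu k - x)) / s"
      using N unfolding wv b_def by (simp add: sum_divide_distrib power2_eq_square)
    also have "(\<Sum>k=1..N. (vD N k 1)\<^sup>2 / (nu k - x)) = 1 / (2 * w)"
      using sec w unfolding nu_def by (simp add: field_simps)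
    finally show ?thesis .
  qed
  then show "wvec N w e x $ 0 = 1 / (2 * w) / sqrt (\<Sum>k=1..N. (vD N k 1)\<^sup>2 / (nuT N w e k - x)\<^sup>2)"
    by (simp add: s_def S2_def nu_def)
  have Tw: "Tom N w e *\<^sub>v wvec N w e x = vec N (\<lambda>i. \<Sum>k=1..N. b k * nu k * vD N k (i+1))"
    unfolding wv nu_def by (rule comb_mv[OF Tom_carrier]) (rule Tom_vvec)
  have Pw: "Pmat N w *\<^sub>v wvec N w e x = vec N (\<lambda>i. if i = 0 then - 1 / s else 0)"
    unfolding P_mv[OF wvec_carrier] w0 using w by (intro eq_vecI) auto
  have "(Tom N w e + Pmat N w) *\<^sub>v wvec N w e x = x \<cdot>\<^sub>v wvec N w e x"
  proof (rule eq_vecI)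
    fix i assume "i < dim_vec (x \<cdot>\<^sub>v wvec N w e x)"
    then have i: "i < N" by simp
    have "((Tom N w e + Pmat N w) *\<^sub>v wvec N w e x) $ i =
        (\<Sum>k=1..N. b k * nu k * vD N k (i+1)) + (if i = 0 then - 1 / s else 0)"
      using i by (simp add: add_mult_distrib_mat_vec[OF Tom_carrier Pmat_carrier wvec_carrier] Tw Pw)
    also have "(\<Sum>k=1..N. b k * nu k * vD N k (i+1)) = x * (\<Sum>k=1..N. b k * vD N k (i+1)) + (\<Sum>k=1..N. vD N k 1 * vD N k (i+1)) / s"
    proof -
      have "b k * nu k * vD N k (i+1) = x * (b k * vD N k (i+1)) + vD N k 1 * vD N k (i+1) / s" if "k \<in> {1..N}" for k
      proof -
        have "nu k - x \<noteq> 0" using xne that unfolding nu_def by auto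
        then show ?thesis unfolding b_def using spos by (simp add: field_simps)
      qed
      then show ?thesis by (simp add: sum.distrib sum_distrib_left sum_divide_distrib)
    qed
    also have "(\<Sum>k=1..N. vD N k 1 * vD N k (i+1)) = (if i = 0 then 1 else 0)"
      using orth'[of 1 N "i+1"] N i by auto
    finally show "((Tom N w e + Pmat N w) *\<^sub>v wvec N w e x) $ i = (x \<cdot>\<^sub>v wvec N w e x) $ i"
      using i by (simp add: wv)
  qed (simp)
  moreover have "wvec N w e x \<noteq> 0\<^sub>v N"
  proof
    assume "wvec N w e x = 0\<^sub>v N"
    then have "wvec N w e x $ 0 = 0" using N by simp
    then show False using w0 w spos by simp
  qed
  ultimately show "eigenvector (Tom N w e + Pmat N w) (wvec N w e x) x"
    unfolding eigenvector_def by simp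
qed

lemma real_eig_to_C:
  assumes "eigenvalue (Tom N w e + Pmat N w) x"
  shows "eigenvalue (map_mat complex_of_real (Tom N w e + Pmat N w)) (complex_of_real x)"
proof -
  obtain u where u: "u \<in> carrier_vec N" "u \<noteq> 0\<^sub>v N" "(Tom N w e + Pmat N w) *\<^sub>v u = x \<cdot>\<^sub>v u"
    using assms unfolding eigenvalue_def eigenvector_def by auto
  have c: "Tom N w e + Pmat N w \<in> carrier_mat N N" by simp
  have "map_vec complex_of_real ((Tom N w e + Pmat N w) *\<^sub>v u) = map_mat complex_of_real (Tom N w e + Pmat N w) *\<^sub>v map_vec complex_of_real u"
    by (rule of_real_hom.mult_mat_vec_hom[OF c u(1)])
  then have "map_mat complex_of_real (Tom N w e + Pmat N w) *\<^sub>v map_vec complex_of_real u = complex_of_real x \<cdot>\<^sub>v map_vec complex_of_real u"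
    using u(3) by (simp add: map_vec_smult')
  moreover have "map_vec complex_of_real u \<noteq> 0\<^sub>v N"
  proof
    assume "map_vec complex_of_real u = 0\<^sub>v N"
    have "u = 0\<^sub>v N"
    proof (rule eq_vecI)
      fix i assume "i < dim_vec (0\<^sub>v N :: real vec)"
      then have i: "i < N" by simp
      have "map_vec complex_of_real u $ i = 0" using i \<open>map_vec complex_of_real u = 0\<^sub>v N\<close> by simp
      then show "u $ i = 0\<^sub>v N $ i" using i u(1) by simp
    qed (use u(1) in simp)
    then show False using u(2) by simp
  qed
  moreover have "map_vec complex_of_real u \<in> carrier_vec N" using u(1) by simp
  ultimately show ?thesis unfolding eigenvalue_def eigenvector_def by (intro exI[of _ "map_vec complex_of_real u"]) simp
qed

lemma real_secular:
  assumes N: "1 \<le> N" and w: "0 < w" "w < 1/4" and ev: "eigenvalue (Tom N w e + Pmat N w) x"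
  shows "(\<forall>k\<in>{1..N}. x \<noteq> nuT N w e k) \<and> 2 * w * (\<Sum>k=1..N. (vD N k 1)\<^sup>2 / (nuT N w e k - x)) = 1"
proof -
  obtain v where "eigenvector (map_mat complex_of_real (Tom N w e + Pmat N w)) v (complex_of_real x)"
    using real_eig_to_C[OF ev] unfolding eigenvalue_def by auto
  from secular_C[OF N w this] show ?thesis by simp
qed

definition Bmat :: "nat \<Rightarrow> real mat \<Rightarrow> complex mat" where
  "Bmat N T = four_block_mat (0\<^sub>m N N) (- 1\<^sub>m N) (map_mat complex_of_real T) (0\<^sub>m N N)"

lemma Amat_B: "Amat N w e = Bmat N (Tom N w e)" by (simp add: Amat_def Bmat_def)
lemma Aom_B: "Aom N w e = Bmat N (Tom N w e + Pmat N w)" by (simp add: Aom_def Bmat_def)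

lemma B_mv:
  assumes T: "T \<in> carrier_mat N N" and a: "a \<in> carrier_vec N" and d: "d \<in> carrier_vec N"
  shows "Bmat N T *\<^sub>v (a @\<^sub>v d) = (- d) @\<^sub>v (map_mat complex_of_real T *\<^sub>v a)"
proof -
  have cT: "map_mat complex_of_real T \<in> carrier_mat N N" using T by simp
  have "Bmat N T *\<^sub>v (a @\<^sub>v d) = (0\<^sub>m N N *\<^sub>v a + (- 1\<^sub>m N) *\<^sub>v d) @\<^sub>v (map_mat complex_of_real T *\<^sub>v a + 0\<^sub>m N N *\<^sub>v d)"
    unfolding Bmat_def by (rule four_block_mat_mult_vec[OF _ _ cT _ a d]) auto
  also have "0\<^sub>m N N *\<^sub>v a + (- 1\<^sub>m N) *\<^sub>v d = - d"
    using a d by (intro eq_vecI) (auto simp: scalar_prod_def)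
  also have "map_mat complex_of_real T *\<^sub>v a + 0\<^sub>m N N *\<^sub>v d = map_mat complex_of_real T *\<^sub>v a"
    using a d cT by (intro eq_vecI) (auto simp: scalar_prod_def)
  finally show ?thesis .
qed

lemma smult_append: "c \<cdot>\<^sub>v (a @\<^sub>v d) = (c \<cdot>\<^sub>v a) @\<^sub>v (c \<cdot>\<^sub>v d)"
  by (intro eq_vecI) auto

lemma block_eig:
  assumes T: "T \<in> carrier_mat N N" and u: "u \<in> carrier_vec N" "u \<noteq> 0\<^sub>v N"
    and ev: "T *\<^sub>v u = nu \<cdot>\<^sub>v u" and nu: "0 \<le> nu"
  shows "eigenvector (Bmat N T) (stackv u (- (\<i> * sqrt nu))) (\<i> * sqrt nu)
       \<and> eigenvector (Bmat N T) (stackv u (\<i> * sqrt nu)) (- (\<i> * sqrt nu))"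
proof -
  define cu where "cu = map_vec complex_of_real u"
  have cu: "cu \<in> carrier_vec N" using u by (simp add: cu_def)
  have Tcu: "map_mat complex_of_real T *\<^sub>v cu = complex_of_real nu \<cdot>\<^sub>v cu"
  proof -
    have "map_vec complex_of_real (T *\<^sub>v u) = map_mat complex_of_real T *\<^sub>v cu"
      unfolding cu_def by (rule of_real_hom.mult_mat_vec_hom[OF T u(1)])
    then show ?thesis using ev by (simp add: map_vec_smult' cu_def)
  qed
  have cu0: "cu \<noteq> 0\<^sub>v N"
  proof
    assume z: "cu = 0\<^sub>v N"
    have "u = 0\<^sub>v N"
    proof (rule eq_vecI)
      fix i assume "i < dim_vec (0\<^sub>v N :: real vec)"
      then have i: "i < N" by simp
      have "cu $ i = 0" using i z by simp
      then show "u $ i = 0\<^sub>v N $ i" using i u(1) by (simp add: cu_def)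
    qed (use u(1) in simp)
    then show False using u(2) by simp
  qed
  have sq: "(\<i> * complex_of_real (sqrt nu)) * (\<i> * complex_of_real (sqrt nu)) = - complex_of_real nu"
  proof -
    have "complex_of_real (sqrt nu) * complex_of_real (sqrt nu) = complex_of_real nu"
      using nu by (simp flip: of_real_mult)
    then show ?thesis by (simp add: algebra_simps)
  qed
  have gen: "eigenvector (Bmat N T) (stackv u (- mu)) mu" if mu: "mu * mu = - complex_of_real nu" for mu
  proof -
    have sc: "(- mu) \<cdot>\<^sub>v cu \<in> carrier_vec N" using cu by simp
    have "Bmat N T *\<^sub>v stackv u (- mu) = (- ((- mu) \<cdot>\<^sub>v cu)) @\<^sub>v (complex_of_real nu \<cdot>\<^sub>v cu)"
      unfolding stackv_def cu_def[symmetric] B_mv[OF T cu sc] Tcu ..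
    also have "\<dots> = mu \<cdot>\<^sub>v stackv u (- mu)"
      unfolding stackv_def cu_def[symmetric] smult_append
    proof -
      have "- ((- mu) \<cdot>\<^sub>v cu) = mu \<cdot>\<^sub>v cu" by (intro eq_vecI) auto
      moreover have "complex_of_real nu \<cdot>\<^sub>v cu = mu \<cdot>\<^sub>v ((- mu) \<cdot>\<^sub>v cu)"
        using mu by (intro eq_vecI) (auto simp: mult.assoc[symmetric])
      ultimately show "(- ((- mu) \<cdot>\<^sub>v cu)) @\<^sub>v (complex_of_real nu \<cdot>\<^sub>v cu) = (mu \<cdot>\<^sub>v cu) @\<^sub>v (mu \<cdot>\<^sub>v ((- mu) \<cdot>\<^sub>v cu))"
        by simp
    qed
    finally have e: "Bmat N T *\<^sub>v stackv u (- mu) = mu \<cdot>\<^sub>v stackv u (- mu)" .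
    have c: "stackv u (- mu) \<in> carrier_vec (dim_row (Bmat N T))"
      using cu by (simp add: stackv_def cu_def[symmetric] Bmat_def)
    have "stackv u (- mu) \<noteq> 0\<^sub>v (dim_row (Bmat N T))"
    proof
      assume z: "stackv u (- mu) = 0\<^sub>v (dim_row (Bmat N T))"
      have "cu = 0\<^sub>v N"
      proof (rule eq_vecI)
        fix i assume "i < dim_vec (0\<^sub>v N :: complex vec)"
        then have i: "i < N" by simp
        have "stackv u (- mu) $ i = 0" using z i by (simp add: Bmat_def)
        then show "cu $ i = 0\<^sub>v N $ i" using i cu by (simp add: stackv_def cu_def[symmetric])
      qed (use cu in simp)
      then show False using cu0 by simp
    qed
    then show ?thesis unfolding eigenvector_def using c e by simp
  qed
  have "eigenvector (Bmat N T) (stackv u (- (\<i> * sqrt nu))) (\<i> * sqrt nu)"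
    by (rule gen) (use sq in simp)
  moreover have "eigenvector (Bmat N T) (stackv u (- (- (\<i> * sqrt nu)))) (- (\<i> * sqrt nu))"
    by (rule gen) (use sq in simp)
  ultimately show ?thesis by simp
qed

lemma block_eigval:
  assumes T: "T \<in> carrier_mat N N" and ev: "eigenvalue (Bmat N T) z"
  shows "eigenvalue (map_mat complex_of_real T) (- (z * z))"
proof -
  obtain v where v: "v \<in> carrier_vec (N + N)" "v \<noteq> 0\<^sub>v (N + N)" "Bmat N T *\<^sub>v v = z \<cdot>\<^sub>v v"
    using ev unfolding eigenvalue_def eigenvector_def by (auto simp: Bmat_def)
  define a where "a = vec_first v N"
  define d where "d = vec_last v N"
  have vad: "v = a @\<^sub>v d" using v(1) by (simp add: a_def d_def)
  have a: "a \<in> carrier_vec N" and d: "d \<in> carrier_vec N" by (auto simp: a_def d_def)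
  have "(- d) @\<^sub>v (map_mat complex_of_real T *\<^sub>v a) = (z \<cdot>\<^sub>v a) @\<^sub>v (z \<cdot>\<^sub>v d)"
    using v(3) unfolding vad B_mv[OF T a d] smult_append .
  then have e1: "- d = z \<cdot>\<^sub>v a" and e2: "map_mat complex_of_real T *\<^sub>v a = z \<cdot>\<^sub>v d"
    using a d T by (subst (asm) append_vec_eq; auto)+
  have "map_mat complex_of_real T *\<^sub>v a = (- (z * z)) \<cdot>\<^sub>v a"
  proof -
    have "d = - (z \<cdot>\<^sub>v a)" using e1 by (metis uminus_uminus_vec)
    then show ?thesis using e2 a by (intro eq_vecI) (auto simp: mult.assoc)
  qed
  moreover have "a \<noteq> 0\<^sub>v N"
  proof
    assume z: "a = 0\<^sub>v N"
    then have "d = 0\<^sub>v N" using e1 d by (intro eq_vecI) (auto dest!: arg_cong[of _ _ "\<lambda>x. x $ _"] simp: vec_eq_iff)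
    then have "a @\<^sub>v d = 0\<^sub>v (N + N)" using z by (intro eq_vecI) auto
    then show False using v(2) vad by simp
  qed
  ultimately show ?thesis unfolding eigenvalue_def eigenvector_def using a T by (intro exI[of _ a]) simp
qed

lemma tele:
  fixes a b :: "nat \<Rightarrow> real"
  assumes "\<forall>i. 1 \<le> i \<and> i \<le> n \<longrightarrow> a (i - 1) + a (i + 1) = al * a i"
    and "\<forall>i. 1 \<le> i \<and> i \<le> n \<longrightarrow> b (i - 1) + b (i + 1) = be * b i"
  shows "(al - be) * (\<Sum>i=1..n. a i * b i) = (a (n+1) * b n - a n * b (n+1)) - (a 1 * b 0 - a 0 * b 1)"
  using assms
proof (induction n)
  case 0 then show ?case by simp
next
  case (Suc n)
  have ra: "a n + a (n + 2) = al * a (n+1)" using Suc.prems(1)[rule_format, of "n+1"] by simp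
  have rb: "b n + b (n + 2) = be * b (n+1)" using Suc.prems(2)[rule_format, of "n+1"] by simp
  have ih: "(al - be) * (\<Sum>i=1..n. a i * b i) = (a (n+1) * b n - a n * b (n+1)) - (a 1 * b 0 - a 0 * b 1)"
    using Suc.prems by (intro Suc.IH) auto
  have "(al - be) * (a (n+1) * b (n+1)) = (al * a (n+1)) * b (n+1) - a (n+1) * (be * b (n+1))"
    by (simp add: algebra_simps)
  also have "\<dots> = (a n + a (n + 2)) * b (n+1) - a (n+1) * (b n + b (n + 2))" by (simp only: ra rb)
  finally have st: "(al - be) * (a (n+1) * b (n+1)) = (a (n+2) * b (n+1) - a (n+1) * b (n+2)) - (a (n+1) * b n - a n * b (n+1))"
    by (simp add: algebra_simps)
  show ?case using ih st by (simp add: distrib_left)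
qed

lemma Gform:
  assumes N: "1 \<le> N" and sM: "sin ((real N + 1) * ph) \<noteq> 0"
    and ne: "\<forall>k\<in>{1..N}. lamD N k \<noteq> 2 - 2 * cos ph"
  shows "(\<Sum>k=1..N. (vD N k 1)\<^sup>2 / (lamD N k - (2 - 2 * cos ph))) = sin (real N * ph) / sin ((real N + 1) * ph)"
proof -
  define M where "M = real N + 1"
  define u where "u i = sin ((M - real i) * ph) / sin (M * ph)" for i :: nat
  define r where "r = 2 - 2 * cos ph"
  have urec: "u (i - 1) + u (i + 1) = (2 * cos ph) * u i" if "1 \<le> i" for i
  proof -
    have a: "(M - real (i - 1)) * ph = (M - real i) * ph + ph" using that by (simp add: of_nat_diff algebra_simps)
    have b: "(M - real (i + 1)) * ph = (M - real i) * ph - ph" by (simp add: algebra_simps)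
    define A where "A = (M - real i) * ph"
    have h: "sin (A + ph) + sin (A - ph) = (2 * cos ph) * sin A" by (simp add: sin_add sin_diff)
    show ?thesis unfolding u_def a b A_def[symmetric]
      by (simp only: add_divide_distrib[symmetric] h times_divide_eq_right)
  qed
  have u0: "u 0 = 1" using sM by (simp add: u_def M_def)
  have uN: "u (N + 1) = 0" by (simp add: u_def M_def)
  have u1: "u 1 = sin (real N * ph) / sin ((real N + 1) * ph)" by (simp add: u_def M_def)
  have ck: "(\<Sum>i=1..N. vD N k i * u i) = vD N k 1 / (lamD N k - r)" if k: "k \<in> {1..N}" for k
  proof -
    have "((2 - lamD N k) - 2 * cos ph) * (\<Sum>i=1..N. vD N k i * u i)
        = (vD N k (N+1) * u N - vD N k N * u (N+1)) - (vD N k 1 * u 0 - vD N k 0 * u 1)"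
      apply (rule tele) using vD_rec urec by blast+
    also have "\<dots> = - vD N k 1" using vD_end[of N k] uN u0 by simp
    finally have "(lamD N k - r) * (\<Sum>i=1..N. vD N k i * u i) = vD N k 1"
      unfolding r_def by (simp add: algebra_simps)
    moreover have "lamD N k - r \<noteq> 0" using ne k unfolding r_def by auto
    ultimately show ?thesis by (simp add: field_simps)
  qed
  have "(\<Sum>k=1..N. (vD N k 1)\<^sup>2 / (lamD N k - r)) = (\<Sum>k=1..N. vD N k 1 * (\<Sum>i=1..N. vD N k i * u i))"
    by (rule sum.cong[OF refl]) (simp only: ck power2_eq_square times_divide_eq_right)
  also have "\<dots> = (\<Sum>i=1..N. u i * (\<Sum>k=1..N. vD N k 1 * vD N k i))"
    by (simp add: sum_distrib_left mult_ac) (rule sum.swap)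
  also have "\<dots> = (\<Sum>i=1..N. if i = 1 then u 1 else 0)"
  proof (intro sum.cong refl)
    fix i assume i: "i \<in> {1..N}"
    then have "(\<Sum>k=1..N. vD N k 1 * vD N k i) = (if 1 = i then 1 else 0)"
      using orth'[of 1 N i] N by simp
    then show "u i * (\<Sum>k=1..N. vD N k 1 * vD N k i) = (if i = 1 then u 1 else 0)" by auto
  qed
  also have "\<dots> = u 1" using N by simp
  finally show ?thesis unfolding u1 r_def .
qed

lemma Fform:
  assumes N: "1 \<le> N" and w: "0 < w" "w < 1/4" and r: "0 \<le> r" "r \<le> 4"
    and ne: "\<forall>k\<in>{1..N}. lamD N k \<noteq> r"
  shows "(\<Sum>k=1..N. (vD N k 1)\<^sup>2 / (nuT N w e k - pp w e r))
     = (\<Sum>k=1..N. (vD N k 1)\<^sup>2 / (lamD N k - r)) / (1 + 4 * w - 2 * w * r)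
       + w * (\<Sum>k=1..N. (vD N k 1)\<^sup>2 / ((1 + 4 * w - w * (lamD N k + r)) * (1 + 4 * w - 2 * w * r)))"
proof -
  define Qs where "Qs = 1 + 4 * w - 2 * w * r"
  have "w * r \<le> w * 4" using w r by (intro mult_left_mono) auto
  then have Qs: "Qs > 0" using w unfolding Qs_def by linarith
  have t: "(vD N k 1)\<^sup>2 / (nuT N w e k - pp w e r) = (vD N k 1)\<^sup>2 / (lamD N k - r) / Qs
     + w * ((vD N k 1)\<^sup>2 / ((1 + 4 * w - w * (lamD N k + r)) * Qs))" if k: "k \<in> {1..N}" for k
  proof -
    define l where "l = lamD N k"
    have l: "0 \<le> l" "l \<le> 4" using lam_range unfolding l_def by auto
    define Q where "Q = 1 + 4 * w - w * (l + r)"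
    have Q: "Q > 0"
    proof -
      have "w * (l + r) \<le> w * 8" using w l r by (intro mult_left_mono) auto
      then show ?thesis unfolding Q_def using w by linarith
    qed
    have lr: "l - r \<noteq> 0" using ne k unfolding l_def by auto
    have "nuT N w e k - pp w e r = (l - r) * Q"
      unfolding nuT_pp l_def[symmetric] Q_def using pp_diff[of w e l r] by (simp add: algebra_simps)
    moreover have "Qs - Q = w * (l - r)" unfolding Qs_def Q_def by (simp add: algebra_simps)
    ultimately have D: "nuT N w e k - pp w e r = (l - r) * Q" and QQ: "Q + w * (l - r) = Qs" by auto
    have "(vD N k 1)\<^sup>2 / (l - r) / Qs + w * ((vD N k 1)\<^sup>2 / (Q * Qs)) = (vD N k 1)\<^sup>2 * (Q + w * (l - r)) / ((l - r) * Q * Qs)"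
      using Q Qs lr by (simp add: field_simps)
    also have "\<dots> = (vD N k 1)\<^sup>2 / ((l - r) * Q)" unfolding QQ using Qs by simp
    finally show ?thesis unfolding l_def[symmetric] Q_def[symmetric] D by simp
  qed
  have "(\<Sum>k=1..N. (vD N k 1)\<^sup>2 / (nuT N w e k - pp w e r)) = (\<Sum>k=1..N. (vD N k 1)\<^sup>2 / (lamD N k - r) / Qs
     + w * ((vD N k 1)\<^sup>2 / ((1 + 4 * w - w * (lamD N k + r)) * Qs)))"
    by (rule sum.cong[OF refl]) (erule t)
  also have "\<dots> = (\<Sum>k=1..N. (vD N k 1)\<^sup>2 / (lamD N k - r)) / Qs + w * (\<Sum>k=1..N. (vD N k 1)\<^sup>2 / ((1 + 4 * w - w * (lamD N k + r)) * Qs))"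
    by (simp only: sum.distrib sum_divide_distrib sum_distrib_left)
  finally show ?thesis unfolding Qs_def .
qed

lemma E_bounds:
  assumes N: "1 \<le> N" and w: "0 < w" "w < 1/4" and r: "0 \<le> r" "r \<le> 4"
  shows "0 \<le> (\<Sum>k=1..N. (vD N k 1)\<^sup>2 / ((1 + 4 * w - w * (lamD N k + r)) * (1 + 4 * w - 2 * w * r)))"
    and "(\<Sum>k=1..N. (vD N k 1)\<^sup>2 / ((1 + 4 * w - w * (lamD N k + r)) * (1 + 4 * w - 2 * w * r))) \<le> 1 / (1 - 4 * w)\<^sup>2"
proof -
  have Qb: "1 - 4 * w \<le> 1 + 4 * w - w * (l + r)" if "0 \<le> l" "l \<le> 4" for l
  proof -
    have "w * (l + r) \<le> w * 8" using w that r by (intro mult_left_mono) auto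
    then show ?thesis by linarith
  qed
  have q0: "0 < 1 - 4 * w" using w by simp
  have tb: "0 \<le> (vD N k 1)\<^sup>2 / ((1 + 4 * w - w * (lamD N k + r)) * (1 + 4 * w - 2 * w * r))
      \<and> (vD N k 1)\<^sup>2 / ((1 + 4 * w - w * (lamD N k + r)) * (1 + 4 * w - 2 * w * r)) \<le> (vD N k 1)\<^sup>2 / (1 - 4 * w)\<^sup>2" for k
  proof -
    have a: "1 - 4 * w \<le> 1 + 4 * w - w * (lamD N k + r)" using Qb[of "lamD N k"] lam_range by auto
    have b: "1 - 4 * w \<le> 1 + 4 * w - 2 * w * r" using Qb[of r] r by (simp add: algebra_simps)
    have "(1 - 4 * w)\<^sup>2 \<le> (1 + 4 * w - w * (lamD N k + r)) * (1 + 4 * w - 2 * w * r)"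
      unfolding power2_eq_square using a b q0 by (intro mult_mono) auto
    moreover have "0 < (1 - 4 * w)\<^sup>2" using q0 by simp
    ultimately show ?thesis by (auto intro!: divide_left_mono divide_nonneg_pos mult_pos_pos) (use a b q0 in linarith)+
  qed
  show "0 \<le> (\<Sum>k=1..N. (vD N k 1)\<^sup>2 / ((1 + 4 * w - w * (lamD N k + r)) * (1 + 4 * w - 2 * w * r)))"
    using tb by (intro sum_nonneg) auto
  have "(\<Sum>k=1..N. (vD N k 1)\<^sup>2 / ((1 + 4 * w - w * (lamD N k + r)) * (1 + 4 * w - 2 * w * r)))
      \<le> (\<Sum>k=1..N. (vD N k 1)\<^sup>2 / (1 - 4 * w)\<^sup>2)"
    using tb by (intro sum_mono) auto
  also have "\<dots> = 1 / (1 - 4 * w)\<^sup>2" using sum_a[OF N] by (simp add: sum_divide_distrib[symmetric])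
  finally show "(\<Sum>k=1..N. (vD N k 1)\<^sup>2 / ((1 + 4 * w - w * (lamD N k + r)) * (1 + 4 * w - 2 * w * r))) \<le> 1 / (1 - 4 * w)\<^sup>2" .
qed

lemma inv_sq_sum: "(\<Sum>m=1..n. 1 / (real m)\<^sup>2) \<le> 2 - 1 / real n"
proof (induction n)
  case 0 then show ?case by simp
next
  case (Suc n)
  show ?case
  proof (cases "n = 0")
    case True then show ?thesis by simp
  next
    case False
    then have n: "real n \<ge> 1" by simp
    have e: "1 / real n - 1 / (real n + 1) = 1 / (real n * (real n + 1))"
      using n by (simp add: field_simps)
    have "real n * (real n + 1) \<le> (real n + 1)\<^sup>2" by (simp add: power2_eq_square)
    then have "1 / (real n + 1)\<^sup>2 \<le> 1 / (real n * (real n + 1))"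
      using n by (intro divide_left_mono) auto
    then have h: "1 / (real n + 1)\<^sup>2 \<le> 1 / real n - 1 / (real n + 1)" unfolding e .
    have rs: "real (Suc n) = real n + 1" by simp
    have "(\<Sum>m=1..Suc n. 1 / (real m)\<^sup>2) = (\<Sum>m=1..n. 1 / (real m)\<^sup>2) + 1 / (real (Suc n))\<^sup>2" by simp
    then show ?thesis unfolding rs using Suc.IH h by linarith
  qed
qed

lemma inv_sq_sum_off:
  assumes j: "j \<in> {1..N}"
  shows "(\<Sum>k\<in>{1..N} - {j}. 1 / (real k - real j)\<^sup>2) \<le> 4"
proof -
  have split: "{1..N} - {j} = {1..<j} \<union> {j+1..N}" using j by auto
  have "(\<Sum>k\<in>{1..N} - {j}. 1 / (real k - real j)\<^sup>2) = (\<Sum>k\<in>{1..<j}. 1 / (real k - real j)\<^sup>2) + (\<Sum>k\<in>{j+1..N}. 1 / (real k - real j)\<^sup>2)"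
    unfolding split by (rule sum.union_disjoint) auto
  also have "(\<Sum>k\<in>{1..<j}. 1 / (real k - real j)\<^sup>2) = (\<Sum>m\<in>{1..j-1}. 1 / (real m)\<^sup>2)"
  proof (rule sum.reindex_bij_witness[of _ "\<lambda>m. j - m" "\<lambda>k. j - k"])
    fix k assume "k \<in> {1..<j}"
    then show "1 / (real (j - k))\<^sup>2 = 1 / (real k - real j)\<^sup>2" by (simp add: of_nat_diff power2_commute)
  qed auto
  also have "(\<Sum>k\<in>{j+1..N}. 1 / (real k - real j)\<^sup>2) = (\<Sum>m\<in>{1..N-j}. 1 / (real m)\<^sup>2)"
  proof (rule sum.reindex_bij_witness[of _ "\<lambda>m. m + j" "\<lambda>k. k - j"])
    fix k assume "k \<in> {j+1..N}"
    then show "1 / (real (k - j))\<^sup>2 = 1 / (real k - real j)\<^sup>2" by (simp add: of_nat_diff)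
  qed auto
  also have "(\<Sum>m\<in>{1..j-1}. 1 / (real m)\<^sup>2) + (\<Sum>m\<in>{1..N-j}. 1 / (real m)\<^sup>2) \<le> 2 + 2"
    using inv_sq_sum[of "j-1"] inv_sq_sum[of "N-j"]
    by (smt (verit) divide_nonneg_nonneg of_nat_0_le_iff)
  finally show ?thesis by simp
qed

lemma sin_ge_xcos:
  assumes "0 \<le> x" "x \<le> pi"
  shows "x * cos x \<le> sin x"
proof -
  have "(\<lambda>t. sin t - t * cos t) 0 \<le> (\<lambda>t. sin t - t * cos t) x"
  proof (rule DERIV_nonneg_imp_nondecreasing[OF assms(1)])
    fix t assume t0: "0 \<le> t" and t1: "t \<le> x"
    then have t: "0 \<le> t \<and> t \<le> x" by simp
    show "\<exists>y. ((\<lambda>t. sin t - t * cos t) has_real_derivative y) (at t) \<and> 0 \<le> y"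
    proof (intro exI conjI)
      show "((\<lambda>t. sin t - t * cos t) has_real_derivative (t * sin t)) (at t)"
        by (auto intro!: derivative_eq_intros)
      show "0 \<le> t * sin t" using t assms by (intro mult_nonneg_nonneg sin_ge_zero) auto
    qed
  qed
  then show ?thesis by simp
qed

lemma cos_ge_quad: "1 - x\<^sup>2 / 2 \<le> cos (x::real)"
proof -
  have "cos x = cos (2 * (x/2))" by simp
  also have "\<dots> = 1 - 2 * (sin (x/2))\<^sup>2" by (rule cos_double_sin)
  finally have c: "cos x = 1 - 2 * (sin (x/2))\<^sup>2" .
  have "\<bar>sin (x/2)\<bar> \<le> \<bar>x/2\<bar>" by (rule abs_sin_x_le_abs_x)
  then have "(sin (x/2))\<^sup>2 \<le> (x/2)\<^sup>2" by (metis abs_le_square_iff)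
  then show ?thesis unfolding c by (simp add: power_divide)
qed

lemma sin_ge_lin:
  assumes "0 \<le> x" "x \<le> pi/2"
  shows "x / 4 \<le> sin x"
proof (cases "x \<le> 1")
  case True
  have "x * (1 - x\<^sup>2/2) \<le> x * cos x" using assms(1) cos_ge_quad[of x] by (intro mult_left_mono) auto
  moreover have "x * cos x \<le> sin x" using assms by (intro sin_ge_xcos) auto
  moreover have "x / 4 \<le> x * (1 - x\<^sup>2/2)"
  proof -
    have "x\<^sup>2 \<le> 1" using True assms(1) by (simp add: power_le_one)
    then have "1/4 \<le> 1 - x\<^sup>2/2" by simp
    then show ?thesis using assms(1) mult_left_mono[of "1/4" "1 - x\<^sup>2/2" x] by simp
  qed
  ultimately show ?thesis by linarith
next
  case False
  have "sin 1 \<le> sin x" using False assms by (intro sin_monotone_2pi_le) auto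
  moreover have "1 * cos 1 \<le> sin (1::real)" using pi_ge_two by (intro sin_ge_xcos) auto
  moreover have "1 - 1/2 \<le> cos (1::real)" using cos_ge_quad[of 1] by simp
  moreover have "x / 4 \<le> 1/2" using assms pi_less_4 by simp
  ultimately show ?thesis by linarith
qed

lemma sin_sin_le: "sin a * sin b \<le> (sin ((a + b) / 2))\<^sup>2" for a b :: real
proof -
  have e: "2 * ((a + b) / 2) = a + b" by simp
  have c: "cos (a + b) = 1 - 2 * (sin ((a + b) / 2))\<^sup>2" using cos_double_sin[of "(a + b) / 2"] by (simp only: e)
  have "cos (a - b) - cos (a + b) \<le> 2 * (sin ((a + b) / 2))\<^sup>2" using c cos_le_one[of "a - b"] by linarith
  then show ?thesis unfolding sin_times_sin by simp
qed

definition Fs :: "nat \<Rightarrow> real \<Rightarrow> real \<Rightarrow> real \<Rightarrow> real" where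
  "Fs N w e x = (\<Sum>k=1..N. (vD N k 1)\<^sup>2 / (nuT N w e k - x))"

lemma phi_facts:
  fixes N j :: nat and s :: real
  defines "M \<equiv> real N + 1"
  defines "pj \<equiv> real j * pi / M"
  assumes N: "1 \<le> N" and j: "j \<in> {1..N}" and s: "0 < s" "s \<le> pi / (2 * M)"
  shows "lamD N (j - 1) < 2 - 2 * cos (pj - s)" and "2 - 2 * cos (pj - s) < lamD N j"
    and "0 \<le> 2 - 2 * cos (pj - s)" and "2 - 2 * cos (pj - s) \<le> 4"
    and "\<forall>k\<in>{1..N}. lamD N k \<noteq> 2 - 2 * cos (pj - s)"
    and "0 < pj - s" and "pj - s < pi"
    and "sin (M * (pj - s)) \<noteq> 0"
    and "sin (real N * (pj - s)) / sin (M * (pj - s)) = cos (pj - s) + sin (pj - s) * cos (M * s) / sin (M * s)"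
proof -
  have M: "M > 0" "M \<ge> 2" using N by (auto simp: M_def)
  have pjpi: "pj \<le> pi" using ang_lt_pi[of j N] j unfolding pj_def M_def by auto
  have pj1: "real (j - 1) * pi / M = pj - pi / M" using j unfolding pj_def by (simp add: of_nat_diff diff_divide_distrib left_diff_distrib)
  have h2: "pi / (2 * M) = (pi / M) / 2" by simp
  have "pi / M > 0" using M by simp
  then have sth: "s < pi / M" using s h2 by linarith
  have p1: "0 \<le> pj - pi / M"
  proof -
    have "pi / M \<le> real j * pi / M" using j M by (intro divide_right_mono) auto
    then show ?thesis unfolding pj_def by simp
  qed
  show pos: "0 < pj - s" using p1 sth by linarith
  show ltpi: "pj - s < pi" using pjpi s by linarith
  have c1: "cos pj < cos (pj - s)" using pjpi s pos by (subst cos_mono_less_eq) auto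
  have c2: "cos (pj - s) < cos (pj - pi / M)" using p1 pjpi s sth ltpi by (subst cos_mono_less_eq) auto
  show l1: "lamD N (j - 1) < 2 - 2 * cos (pj - s)"
    unfolding lamD_cos M_def[symmetric] pj1 using c2 by simp
  show l2: "2 - 2 * cos (pj - s) < lamD N j"
    unfolding lamD_cos M_def[symmetric] pj_def[symmetric] using c1 by simp
  show "0 \<le> 2 - 2 * cos (pj - s)" using l1 lam_range[of N "j-1"] by linarith
  show "2 - 2 * cos (pj - s) \<le> 4" using l2 lam_range[of N j] by linarith
  show "\<forall>k\<in>{1..N}. lamD N k \<noteq> 2 - 2 * cos (pj - s)"
  proof
    fix k assume k: "k \<in> {1..N}"
    show "lamD N k \<noteq> 2 - 2 * cos (pj - s)"
    proof (cases "k < j")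
      case True
      have "lamD N k \<le> lamD N (j - 1)"
      proof (cases "k = j - 1")
        case False
        then have "k < j - 1" using True by linarith
        moreover have "j - 1 \<le> N" using j by auto
        ultimately show ?thesis using lam_strict[of k "j-1" N] by simp
      qed simp
      then show ?thesis using l1 by linarith
    next
      case False
      then have "lamD N j \<le> lamD N k" using k lam_strict[of j k N] by (cases "k = j") auto
      then show ?thesis using l2 by linarith
    qed
  qed
  have Mpj: "M * (pj - s) = real j * pi - M * s" unfolding pj_def using M by (simp add: field_simps)
  have ys: "0 < M * s" "M * s < pi" using s M sth by (auto simp: field_simps)
  have sy: "sin (M * s) > 0" using ys by (intro sin_gt_zero) auto
  have sinM: "sin (M * (pj - s)) = - ((-1)^j * sin (M * s))" unfolding Mpj by (simp add: sin_diff)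
  have cosM: "cos (M * (pj - s)) = (-1)^j * cos (M * s)" unfolding Mpj by (simp add: cos_diff)
  show sM: "sin (M * (pj - s)) \<noteq> 0" unfolding sinM using sy by simp
  have NM: "real N * (pj - s) = M * (pj - s) - (pj - s)" by (simp add: M_def algebra_simps)
  have "sin (real N * (pj - s)) = sin (M * (pj - s)) * cos (pj - s) - cos (M * (pj - s)) * sin (pj - s)"
    unfolding NM sin_diff ..
  then have "sin (real N * (pj - s)) / sin (M * (pj - s)) = cos (pj - s) - sin (pj - s) * (cos (M * (pj - s)) / sin (M * (pj - s)))"
    using sM by (simp add: field_simps)
  also have "cos (M * (pj - s)) / sin (M * (pj - s)) = - (cos (M * s) / sin (M * s))"
    unfolding sinM cosM by (simp add: power_minus1_odd minus_one_power_iff)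
  finally show "sin (real N * (pj - s)) / sin (M * (pj - s)) = cos (pj - s) + sin (pj - s) * cos (M * s) / sin (M * s)"
    by simp
qed

lemma sinphi:
  fixes pj s w :: real
  assumes sj: "0 \<le> sin pj" and s: "0 \<le> s" "s \<le> 4 * w * sin pj" "s \<le> 1" and w: "0 < w"
  shows "sin pj * (1 - 6 * w) \<le> sin (pj - s)" and "sin (pj - s) \<le> sin pj * (1 + 4 * w)"
proof -
  have e: "sin (pj - s) = sin pj * cos s - cos pj * sin s" by (rule sin_diff)
  have cs: "1 - s\<^sup>2 / 2 \<le> cos s" "cos s \<le> 1" using cos_ge_quad[of s] by auto
  have ss: "0 \<le> sin s" "sin s \<le> s" using s pi_ge_two by (auto intro!: sin_ge_zero sin_x_le_x)
  have cp: "\<bar>cos pj\<bar> \<le> 1" by simp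
  have t1: "\<bar>cos pj * sin s\<bar> \<le> s" using cp ss by (simp add: abs_mult) (metis abs_of_nonneg mult_le_one mult_right_le_one_le ss(1) abs_ge_zero order_trans cp ss(2) mult.commute mult_right_mono)
  have t2: "sin pj * cos s \<le> sin pj" using sj cs(2) by (simp add: mult_left_le)
  have t3: "sin pj * (1 - s\<^sup>2 / 2) \<le> sin pj * cos s" by (rule mult_left_mono[OF cs(1) sj])
  have "s\<^sup>2 \<le> s" using s by (simp add: power2_eq_square mult_left_le_one_le)
  then have t4: "sin pj * (s\<^sup>2 / 2) \<le> sin pj * (s / 2)" using sj by (intro mult_left_mono) auto
  have t5: "sin pj * (s / 2) \<le> s / 2" using sj s sin_le_one[of pj] by (simp add: mult_left_le_one_le)
  have t6: "- s \<le> - (cos pj * sin s)" "- (cos pj * sin s) \<le> s" using t1 by linarith+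
  have t7: "sin pj * (1 + 4 * w) = sin pj + 4 * w * sin pj" "sin pj * (1 - 6 * w) = sin pj - 6 * w * sin pj"
    "sin pj * (1 - s\<^sup>2 / 2) = sin pj - sin pj * (s\<^sup>2 / 2)" by (simp_all add: algebra_simps)
  show "sin (pj - s) \<le> sin pj * (1 + 4 * w)" unfolding e t7 using t6 t2 s(2) by linarith
  show "sin pj * (1 - 6 * w) \<le> sin (pj - s)" unfolding e t7 using t6 t3 t4 t5 s(2) t7(3) by linarith
qed

lemma hform:
  fixes N j :: nat and s w e :: real
  defines "M \<equiv> real N + 1"
  defines "pj \<equiv> real j * pi / M"
  defines "r \<equiv> 2 - 2 * cos (pj - s)"
  assumes N: "1 \<le> N" and j: "j \<in> {1..N}" and s: "0 < s" "s \<le> pi / (2 * M)" and w: "0 < w" "w < 1/4"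
  shows "\<exists>E Qs. Fs N w e (pp w e r) = (cos (pj - s) + sin (pj - s) * cos (M * s) / sin (M * s)) / Qs + w * E
      \<and> 0 \<le> E \<and> E \<le> 1 / (1 - 4 * w)\<^sup>2 \<and> 1 - 4 * w \<le> Qs \<and> Qs \<le> 1 + 4 * w"
proof -
  note pf = phi_facts[OF N j s[unfolded M_def], folded M_def, folded pj_def, folded r_def]
  have Qb: "1 - 4 * w \<le> 1 + 4 * w - 2 * w * r" "1 + 4 * w - 2 * w * r \<le> 1 + 4 * w"
  proof -
    have "0 \<le> w * r" "w * r \<le> w * 4" using w pf(3,4) by (auto intro: mult_left_mono)
    then show "1 - 4 * w \<le> 1 + 4 * w - 2 * w * r" "1 + 4 * w - 2 * w * r \<le> 1 + 4 * w" by linarith+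
  qed
  show ?thesis
    apply (rule exI[of _ "(\<Sum>k=1..N. (vD N k 1)\<^sup>2 / ((1 + 4 * w - w * (lamD N k + r)) * (1 + 4 * w - 2 * w * r)))"])
    apply (rule exI[of _ "1 + 4 * w - 2 * w * r"])
    using Fform[OF N w pf(3,4) pf(5), of e] Gform[OF N pf(8)[unfolded M_def] pf(5)[unfolded r_def]]
      pf(9) E_bounds[OF N w pf(3,4)] Qb
    unfolding Fs_def r_def M_def by simp
qed

lemma pp_inj:
  assumes "0 \<le> a" "a \<le> 4" "0 \<le> b" "b \<le> 4" "0 \<le> w" "w < 1/4" "pp w e a = pp w e b"
  shows "a = b"
  using pp_strict[of a b w e] pp_strict[of b a w e] assms by (cases a b rule: linorder_cases) auto

lemma basic_j:
  fixes N j :: nat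
  defines "M \<equiv> real N + 1"
  assumes N: "1 \<le> N" and j: "j \<in> {1..N}"
  shows "M \<ge> 2" "0 < sin (real j * pi / M)" "sin (real j * pi / M) \<le> 1"
    "(vD N j 1)\<^sup>2 = 2 / M * (sin (real j * pi / M))\<^sup>2"
proof -
  show "M \<ge> 2" using N by (simp add: M_def)
  have "0 < real j * pi / M" using j by (auto simp: M_def)
  moreover have "real j * pi / M < pi" using ang_lt_pi[of j N] j by (simp add: M_def)
  ultimately show "0 < sin (real j * pi / M)" by (rule sin_gt_zero)
  show "sin (real j * pi / M) \<le> 1" by simp
  have "0 < M" using N by (simp add: M_def)
  then show "(vD N j 1)\<^sup>2 = 2 / M * (sin (real j * pi / M))\<^sup>2"
    by (simp add: vD_def M_def power_mult_distrib)
qed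

lemma low_end:
  fixes N j :: nat and w e :: real
  defines "M \<equiv> real N + 1"
  defines "pj \<equiv> real j * pi / M"
  defines "s \<equiv> w * sin pj / M"
  assumes N: "1 \<le> N" and j: "j \<in> {1..N}" and w: "0 < w" "w \<le> 1/50"
  shows "1 \<le> 2 * w * Fs N w e (pp w e (2 - 2 * cos (pj - s)))"
proof -
  note bj = basic_j[OF N j, folded M_def, folded pj_def]
  define sj where "sj = sin pj"
  have M: "M \<ge> 2" "M > 0" using bj by auto
  have sj: "0 < sj" "sj \<le> 1" using bj by (auto simp: sj_def)
  have s0: "0 < s" using w sj M by (simp add: s_def sj_def)
  have sle: "s \<le> w * sj" unfolding s_def sj_def[symmetric] using w sj M by (simp add: divide_le_eq mult_le_cancel_left1) (smt (verit) mult_le_cancel_left1 mult_nonneg_nonneg)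
  have spi: "s \<le> pi / (2 * M)"
  proof -
    have "w * sj \<le> 1" using mult_le_one[of w sj] w sj by simp
    then have "w * sj \<le> pi / 2" using pi_ge_two by linarith
    then show ?thesis unfolding s_def sj_def[symmetric] using M by (simp add: field_simps)
  qed
  obtain E Qs where h: "Fs N w e (pp w e (2 - 2 * cos (pj - s))) = (cos (pj - s) + sin (pj - s) * cos (M * s) / sin (M * s)) / Qs + w * E"
    and E: "0 \<le> E" and Q: "1 - 4 * w \<le> Qs" "Qs \<le> 1 + 4 * w"
    using hform[OF N j s0 spi[unfolded M_def] w(1)] w unfolding M_def[symmetric] pj_def[symmetric] by fastforce
  define y where "y = M * s"
  have y: "y = w * sj" unfolding y_def s_def sj_def using M by simp
  have y0: "0 < y" "y \<le> w" using y w sj by (auto simp: mult_le_cancel_left1)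
  have ypi: "y < pi" using y0 w pi_ge_two by linarith
  have sy: "0 < sin y" "sin y \<le> y" using sin_gt_zero[OF y0(1) ypi] sin_x_le_x[of y] y0 by auto
  have cy: "1 - y\<^sup>2 / 2 \<le> cos y" by (rule cos_ge_quad)
  have y2: "y\<^sup>2 \<le> w\<^sup>2" using y0 by (simp add: power_mono)
  have "y\<^sup>2 \<le> 1" using y0 w by (simp add: power_le_one)
  then have cy0: "0 \<le> 1 - y\<^sup>2 / 2" by simp
  have "w * sj \<le> 4 * w * sj" using w sj by simp
  then have sle4: "s \<le> 4 * w * sin pj" using sle unfolding sj_def by linarith
  have "w * sj \<le> 1" using mult_le_one[of w sj] w sj by simp
  then have s1: "s \<le> 1" using sle by linarith
  have sphi: "sj * (1 - 6 * w) \<le> sin (pj - s)"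
    using sinphi(1)[of pj s w, OF _ _ sle4 s1 w(1)] sj s0 unfolding sj_def by simp
  have "0 \<le> sj * (1 - 6 * w)" using sj w by simp
  then have sphi0: "0 \<le> sin (pj - s)" using sphi by linarith
  have A1: "(1 - y\<^sup>2 / 2) / y \<le> cos y / sin y"
  proof -
    have "(1 - y\<^sup>2 / 2) / y \<le> cos y / y" using cy y0 by (simp add: divide_right_mono)
    also have "\<dots> \<le> cos y / sin y" using sy cy cy0 by (intro divide_left_mono) auto
    finally show ?thesis .
  qed
  have A2: "sin (pj - s) * ((1 - y\<^sup>2 / 2) / y) \<le> sin (pj - s) * (cos y / sin y)"
    using A1 sphi0 by (rule mult_left_mono)
  have A3: "sj * (1 - 6 * w) * (1 - w\<^sup>2 / 2) \<le> sin (pj - s) * (1 - y\<^sup>2 / 2)"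
  proof -
    have "1 - w\<^sup>2 / 2 \<le> 1 - y\<^sup>2 / 2" using y2 by simp
    moreover have "0 \<le> sj * (1 - 6 * w)" using sj w by simp
    moreover have "w\<^sup>2 \<le> 1" using power_le_one[of w 2] w by simp
    then have "0 \<le> 1 - w\<^sup>2 / 2" by simp
    ultimately show ?thesis using sphi by (intro mult_mono) auto
  qed
  have A4: "(1 - 6 * w) * (1 - w\<^sup>2 / 2) / w \<le> sin (pj - s) * ((1 - y\<^sup>2 / 2) / y)"
  proof -
    have "(1 - 6 * w) * (1 - w\<^sup>2 / 2) / w = sj * (1 - 6 * w) * (1 - w\<^sup>2 / 2) / y"
      unfolding y using sj w by (simp add: field_simps)
    also have "\<dots> \<le> sin (pj - s) * (1 - y\<^sup>2 / 2) / y" using A3 y0 by (simp add: divide_right_mono)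
    finally show ?thesis by simp
  qed
  define G where "G = cos (pj - s) + sin (pj - s) * cos (M * s) / sin (M * s)"
  have G: "-1 + (1 - 6 * w) * (1 - w\<^sup>2 / 2) / w \<le> G"
  proof -
    have c: "-1 \<le> cos (pj - s)" by simp
    show ?thesis unfolding G_def y_def[symmetric] using A2 A4 c unfolding times_divide_eq_right by linarith
  qed
  have key: "1 + 4 * w \<le> 2 * w * (-1 + (1 - 6 * w) * (1 - w\<^sup>2 / 2) / w)"
  proof -
    have "2 * w * (-1 + (1 - 6 * w) * (1 - w\<^sup>2 / 2) / w) = -2 * w + 2 * (1 - 6 * w) * (1 - w\<^sup>2 / 2)"
      using w by (simp add: field_simps)
    also have "\<dots> = 2 - 14 * w - w\<^sup>2 + 6 * w^3" by (simp add: algebra_simps power2_eq_square power3_eq_cube)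
    moreover have "w\<^sup>2 \<le> w / 50" using w by (simp add: power2_eq_square mult_left_le)
    moreover have "0 \<le> w^3" using w by simp
    ultimately show ?thesis using w by linarith
  qed
  have GX: "2 * w * (-1 + (1 - 6 * w) * (1 - w\<^sup>2 / 2) / w) \<le> 2 * w * G" using G w by (intro mult_left_mono) auto
  have "0 < 2 * w * G" using GX key w by linarith
  then have Gpos: "0 < G" using w by (simp add: zero_less_mult_iff)
  have Qpos: "0 < Qs" using Q w by linarith
  have "1 + 4 * w \<le> 2 * w * G" using key GX by linarith
  then have "1 \<le> 2 * w * G / (1 + 4 * w)" using w by (simp add: le_divide_eq)
  also have "\<dots> \<le> 2 * w * G / Qs" using Q Qpos Gpos w by (intro divide_left_mono) auto
  also have "\<dots> \<le> 2 * w * (G / Qs + w * E)" using E w by (simp add: distrib_left)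
  finally show ?thesis unfolding h G_def .
qed

lemma high_end:
  fixes N j :: nat and w e :: real
  defines "M \<equiv> real N + 1"
  defines "pj \<equiv> real j * pi / M"
  defines "s \<equiv> 4 * w * sin pj / M"
  assumes N: "1 \<le> N" and j: "j \<in> {1..N}" and w: "0 < w" "w \<le> 1/50"
  shows "2 * w * Fs N w e (pp w e (2 - 2 * cos (pj - s))) \<le> 1"
proof -
  note bj = basic_j[OF N j, folded M_def, folded pj_def]
  define sj where "sj = sin pj"
  have M: "M \<ge> 2" "M > 0" using bj by auto
  have sj: "0 < sj" "sj \<le> 1" using bj by (auto simp: sj_def)
  have s0: "0 < s" using w sj M by (simp add: s_def sj_def)
  have "0 \<le> 4 * w * sj" using w sj by simp
  then have "4 * w * sj * 1 \<le> 4 * w * sj * M" using M by (intro mult_left_mono) auto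
  then have sle: "s \<le> 4 * w * sj" unfolding s_def sj_def[symmetric] using M by (simp add: divide_le_eq)
  have ws: "w * sj \<le> w" using w sj by (simp add: mult_left_le)
  have s1: "s \<le> 1" using sle ws w by linarith
  have spi: "s \<le> pi / (2 * M)"
  proof -
    have "4 * w * sj \<le> pi / 2" using ws w pi_ge_two by linarith
    then show ?thesis unfolding s_def sj_def[symmetric] using M by (simp add: field_simps)
  qed
  obtain E Qs where h: "Fs N w e (pp w e (2 - 2 * cos (pj - s))) = (cos (pj - s) + sin (pj - s) * cos (M * s) / sin (M * s)) / Qs + w * E"
    and E: "E \<le> 1 / (1 - 4 * w)\<^sup>2" and Q: "1 - 4 * w \<le> Qs" "Qs \<le> 1 + 4 * w"
    using hform[OF N j s0 spi[unfolded M_def] w(1)] w unfolding M_def[symmetric] pj_def[symmetric] by fastforce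
  define y where "y = M * s"
  have y: "y = 4 * w * sj" unfolding y_def s_def sj_def using M by simp
  have y0: "0 < y" "y \<le> 4 * w" using y w sj ws by auto
  have ypi: "y \<le> pi" using y0 w pi_ge_two by linarith
  have sy: "0 < sin y" using sin_gt_zero[OF y0(1)] ypi y0 w pi_ge_two by linarith
  have sxc: "y * cos y \<le> sin y" using sin_ge_xcos[of y] y0 ypi by simp
  have cot: "cos y / sin y \<le> 1 / y"
  proof -
    have "cos y / sin y = (y * cos y) / (y * sin y)" using y0 by simp
    also have "\<dots> \<le> sin y / (y * sin y)" using sxc y0 sy by (intro divide_right_mono) auto
    also have "\<dots> = 1 / y" using sy by simp
    finally show ?thesis .
  qed
  have sphi: "sin (pj - s) \<le> sj * (1 + 4 * w)" "sj * (1 - 6 * w) \<le> sin (pj - s)"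
    using sinphi[of pj s w, OF _ _ sle[unfolded sj_def] s1 w(1)] sj s0 unfolding sj_def by auto
  have "0 \<le> sj * (1 - 6 * w)" using sj w by simp
  then have sphi0: "0 \<le> sin (pj - s)" using sphi by linarith
  have A1: "sin (pj - s) * (cos y / sin y) \<le> sin (pj - s) * (1 / y)" using cot sphi0 by (rule mult_left_mono)
  have A2: "sin (pj - s) * (1 / y) \<le> (1 + 4 * w) / (4 * w)"
  proof -
    have "sin (pj - s) * (1 / y) \<le> sj * (1 + 4 * w) * (1 / y)" using sphi(1) y0 by (intro mult_right_mono) auto
    also have "\<dots> = (1 + 4 * w) / (4 * w)" unfolding y using sj w by (simp add: field_simps)
    finally show ?thesis .
  qed
  define G where "G = cos (pj - s) + sin (pj - s) * cos (M * s) / sin (M * s)"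
  define Gh where "Gh = 1 + (1 + 4 * w) / (4 * w)"
  have G: "G \<le> Gh"
  proof -
    have c: "cos (pj - s) \<le> 1" by simp
    show ?thesis unfolding G_def Gh_def y_def[symmetric] using A1 A2 c unfolding times_divide_eq_right by linarith
  qed
  have Ghp: "0 < Gh" using w unfolding Gh_def by (simp add: add_pos_pos)
  have q: "0 < 1 - 4 * w" using w by simp
  have Qpos: "0 < Qs" using Q q by linarith
  have T1: "2 * w * G / Qs \<le> 2 * w * Gh / (1 - 4 * w)"
  proof (cases "G \<le> 0")
    case True
    then have "2 * w * G / Qs \<le> 0" using w Qpos by (simp add: divide_nonpos_pos mult_nonneg_nonpos)
    moreover have "0 < 2 * w * Gh / (1 - 4 * w)" using w Ghp q by simp
    ultimately show ?thesis by linarith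
  next
    case False
    have "G / Qs \<le> G / (1 - 4 * w)" using False Q q by (intro divide_left_mono) auto
    also have "\<dots> \<le> Gh / (1 - 4 * w)" using G q by (intro divide_right_mono) auto
    finally have "G / Qs \<le> Gh / (1 - 4 * w)" .
    then have "2 * w * (G / Qs) \<le> 2 * w * (Gh / (1 - 4 * w))" using w by (intro mult_left_mono) auto
    then show ?thesis by simp
  qed
  have T2: "2 * w * (w * E) \<le> 2 * w\<^sup>2 / (1 - 4 * w)\<^sup>2"
  proof -
    have "2 * w * (w * E) = (2 * w\<^sup>2) * E" by (simp add: power2_eq_square)
    also have "\<dots> \<le> (2 * w\<^sup>2) * (1 / (1 - 4 * w)\<^sup>2)" using E w by (intro mult_left_mono) auto
    finally show ?thesis by simp
  qed
  have T3: "2 * w * Gh / (1 - 4 * w) + 2 * w\<^sup>2 / (1 - 4 * w)\<^sup>2 \<le> 1"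
  proof -
    have X: "2 * w * Gh = 2 * w + (1 + 4 * w) / 2" unfolding Gh_def using w by (simp add: field_simps)
    have "2 * w * Gh / (1 - 4 * w) + 2 * w\<^sup>2 / (1 - 4 * w)\<^sup>2 = ((2 * w + (1 + 4 * w) / 2) * (1 - 4 * w) + 2 * w\<^sup>2) / (1 - 4 * w)\<^sup>2"
    proof -
      have gen: "A / qq + B / qq\<^sup>2 = (A * qq + B) / qq\<^sup>2" if "qq \<noteq> 0" for A B qq :: real
        using that by (simp add: field_simps power2_eq_square)
      show ?thesis unfolding X using q by (intro gen) simp
    qed
    also have "((2 * w + (1 + 4 * w) / 2) * (1 - 4 * w) + 2 * w\<^sup>2) / (1 - 4 * w)\<^sup>2 = (1/2 + 2 * w - 14 * w\<^sup>2) / (1 - 8 * w + 16 * w\<^sup>2)"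
    proof -
      have "(1 + 4 * w) / 2 = 1/2 + 2 * w" by simp
      then have e2: "(2 * w + (1 + 4 * w) / 2) * (1 - 4 * w) + 2 * w\<^sup>2 = 1/2 + 2 * w - 14 * w\<^sup>2"
        by (simp add: algebra_simps power2_eq_square diff_divide_distrib)
      have e3: "(1 - 4 * w)\<^sup>2 = 1 - 8 * w + 16 * w\<^sup>2" by (simp add: algebra_simps power2_eq_square)
      show ?thesis by (simp only: e2 e3)
    qed
    also have "(1/2 + 2 * w - 14 * w\<^sup>2) / (1 - 8 * w + 16 * w\<^sup>2) \<le> 1"
    proof -
      have "0 \<le> w\<^sup>2" by simp
      then have p: "0 < 1 - 8 * w + 16 * w\<^sup>2" using w by linarith
      have "1/2 + 2 * w - 14 * w\<^sup>2 \<le> 1 - 8 * w + 16 * w\<^sup>2" using w \<open>0 \<le> w\<^sup>2\<close> by linarith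
      then show ?thesis using p by simp
    qed
    finally show ?thesis .
  qed
  have "2 * w * Fs N w e (pp w e (2 - 2 * cos (pj - s))) = 2 * w * G / Qs + 2 * w * (w * E)"
    unfolding h G_def by (simp add: distrib_left)
  also have "\<dots> \<le> 1" using T1 T2 T3 by linarith
  finally show ?thesis .
qed

lemma rest_term:
  fixes N j k :: nat and s w e :: real
  defines "M \<equiv> real N + 1"
  defines "pj \<equiv> real j * pi / M"
  defines "r \<equiv> 2 - 2 * cos (pj - s)"
  assumes N: "1 \<le> N" and j: "j \<in> {1..N}" and k: "k \<in> {1..N}" and kj: "k \<noteq> j"
    and s: "0 < s" "s \<le> pi / (2 * M)" and w: "0 < w" "w \<le> 1/50"
    and sphi: "sin pj / 2 \<le> sin (pj - s)"
  shows "(vD N j 1)\<^sup>2 * ((vD N k 1)\<^sup>2 / (nuT N w e k - pp w e r)\<^sup>2) \<le> 128 / (real k - real j)\<^sup>2"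
proof -
  note pf = phi_facts[OF N j s[unfolded M_def], folded M_def, folded pj_def, folded r_def]
  note bj = basic_j[OF N j, folded M_def, folded pj_def]
  note bk = basic_j[OF N k, folded M_def]
  define pk where "pk = real k * pi / M"
  define ps where "ps = pj - s"
  define sg where "sg = (ps + pk) / 2"
  define dl where "dl = (pk - ps) / 2"
  have M: "M \<ge> 2" "M > 0" using bj by auto
  have pk: "0 < pk" "pk < pi" using bk(2) ang_lt_pi[of k N] k unfolding pk_def M_def by (auto)
  have ps: "0 < ps" "ps < pi" using pf(6,7) unfolding ps_def by auto
  have lk: "lamD N k = 2 - 2 * cos pk" unfolding lamD_cos pk_def M_def ..
  have lr: "lamD N k - r = 4 * sin sg * sin dl"
  proof -
    have "cos ps - cos pk = 2 * sin sg * sin dl" unfolding sg_def dl_def by (rule cos_diff_cos)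
    then show ?thesis unfolding lk r_def ps_def[symmetric] by simp
  qed
  have lrne: "lamD N k - r \<noteq> 0" using pf(5) k by auto
  define ss where "ss = (sin sg)\<^sup>2"
  define sd where "sd = (sin dl)\<^sup>2"
  have D: "(lamD N k - r)\<^sup>2 = 16 * ss * sd" unfolding lr ss_def sd_def by (simp add: power_mult_distrib)
  have Dpos: "0 < 16 * ss * sd" using lrne D by (metis zero_less_power2)
  have ss1: "ss \<le> 1" unfolding ss_def by (simp add: sin_squared_eq)
  have "0 \<le> ss" "0 \<le> sd" unfolding ss_def sd_def by simp_all
  then have ssp: "0 < ss" "0 < sd" using Dpos by (auto simp: zero_less_mult_iff)
  define Qk where "Qk = 1 + 4 * w - w * (r + lamD N k)"
  have Qk: "1 - 4 * w \<le> Qk"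
  proof -
    have "w * (r + lamD N k) \<le> w * 8" using w pf(3,4) lam_range[of N k] by (intro mult_left_mono) auto
    then show ?thesis unfolding Qk_def by linarith
  qed
  have nk: "nuT N w e k - pp w e r = (lamD N k - r) * Qk"
    unfolding nuT_pp Qk_def using pp_diff[of w e "lamD N k" r] by simp
  have den: "(lamD N k - r)\<^sup>2 / 2 \<le> (nuT N w e k - pp w e r)\<^sup>2"
  proof -
    have q1: "1/2 \<le> Qk\<^sup>2"
    proof -
      have "9/10 \<le> Qk" using Qk w by linarith
      then have "(9/10)\<^sup>2 \<le> Qk\<^sup>2" by (intro power_mono) auto
      moreover have "(9/10::real)\<^sup>2 = 81/100" by (simp add: power2_eq_square)
      ultimately show ?thesis by linarith
    qed
    have "(lamD N k - r)\<^sup>2 / 2 = (lamD N k - r)\<^sup>2 * (1/2)" by simp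
    also have "\<dots> \<le> (lamD N k - r)\<^sup>2 * Qk\<^sup>2" using q1 by (intro mult_left_mono) auto
    finally show ?thesis unfolding nk by (simp add: power_mult_distrib)
  qed
  define sj where "sj = sin pj"
  define sk where "sk = sin pk"
  have sj0: "0 < sj" using bj(2) by (simp add: sj_def)
  have sk0: "0 < sk" using sin_gt_zero[OF pk] by (simp add: sk_def)
  have sps: "0 \<le> sin ps" using ps by (simp add: sin_ge_zero less_imp_le)
  have aj: "(vD N j 1)\<^sup>2 = 2 / M * sj\<^sup>2" using bj(4) by (simp add: sj_def)
  have ak: "(vD N k 1)\<^sup>2 = 2 / M * sk\<^sup>2" using bk(4) by (simp add: sk_def pk_def)
  have p1: "sj * sk \<le> 2 * ss"
  proof -
    have "sj \<le> 2 * sin ps" using sphi unfolding sj_def ps_def by simp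
    then have "sj * sk \<le> 2 * sin ps * sk" using sk0 by (intro mult_right_mono) auto
    also have "sin ps * sk \<le> ss" unfolding ss_def sk_def sg_def by (rule sin_sin_le)
    then have "2 * sin ps * sk \<le> 2 * ss" by simp
    finally show ?thesis .
  qed
  have p2: "(sj * sk)\<^sup>2 \<le> 4 * ss" 
  proof -
    have "(sj * sk)\<^sup>2 \<le> (2 * ss)\<^sup>2" using p1 sj0 sk0 by (intro power_mono) auto
    also have "\<dots> = 4 * ss * ss" by (simp add: power2_eq_square)
    also have "\<dots> \<le> 4 * ss * 1" using ss1 ssp by (intro mult_left_mono) auto
    finally show ?thesis by simp
  qed
  have num: "(vD N j 1)\<^sup>2 * (vD N k 1)\<^sup>2 \<le> 16 * ss / M\<^sup>2"
  proof -
    have "(vD N j 1)\<^sup>2 * (vD N k 1)\<^sup>2 = 4 / M\<^sup>2 * (sj * sk)\<^sup>2" unfolding aj ak by (simp add: power2_eq_square)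
    also have "\<dots> \<le> 4 / M\<^sup>2 * (4 * ss)" using p2 M by (intro mult_left_mono) auto
    finally show ?thesis by simp
  qed
  define a where "a = \<bar>real k - real j\<bar>"
  have a1: "1 \<le> a" using kj unfolding a_def by (cases "k < j") auto
  have pkps: "pk - ps = (real k - real j) * pi / M + s" unfolding pk_def ps_def pj_def using M by (simp add: field_simps)
  have sM: "s \<le> pi / M / 2" using s by simp
  define th where "th = pi / M"
  have th0: "0 < th" using M by (simp add: th_def)
  have sth: "s \<le> th / 2" using sM by (simp add: th_def)
  have ath: "th \<le> a * th" using a1 th0 by simp
  have tgt: "a * pi / (4 * M) = a * th / 4" by (simp add: th_def)
  have dlow: "a * pi / (4 * M) \<le> \<bar>dl\<bar>"
  proof (cases "k > j")
    case True
    then have "a = real k - real j" unfolding a_def by simp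
    then have "pk - ps = a * th + s" unfolding pkps th_def by simp
    then have "dl = (a * th + s) / 2" unfolding dl_def by simp
    moreover have "0 \<le> a * th" using a1 th0 by simp
    ultimately have "2 * \<bar>dl\<bar> = a * th + s" using s by simp
    then show ?thesis unfolding tgt using \<open>0 \<le> a * th\<close> s by linarith
  next
    case False
    then have aa: "a = real j - real k" unfolding a_def using kj by simp
    have "(real k - real j) * pi / M = - (a * th)" unfolding aa th_def using M by (simp add: field_simps)
    then have "pk - ps = - (a * th - s)" unfolding pkps by simp
    then have "dl = - (a * th - s) / 2" unfolding dl_def by simp
    moreover have pos: "0 < a * th - s" using sth ath th0 by linarith
    ultimately have "2 * \<bar>dl\<bar> = a * th - s" by simp
    then show ?thesis unfolding tgt using ath sth by linarith
  qed
  have dhigh: "\<bar>dl\<bar> \<le> pi / 2" unfolding dl_def using pk ps by (simp add: abs_le_iff)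
  have sdl: "\<bar>dl\<bar> / 4 \<le> sin \<bar>dl\<bar>" using dhigh by (intro sin_ge_lin) auto
  have sdsq: "sd = (sin \<bar>dl\<bar>)\<^sup>2" unfolding sd_def by (cases "dl \<ge> 0") (auto simp: abs_if)
  have sdb: "a\<^sup>2 / (64 * M\<^sup>2) \<le> sd"
  proof -
    have "a * 2 / (16 * M) \<le> a * pi / (16 * M)" using pi_ge_two a1 M by (intro divide_right_mono mult_left_mono) auto
    also have "\<dots> = (a * pi / (4 * M)) / 4" by simp
    also have "\<dots> \<le> \<bar>dl\<bar> / 4" using dlow by (intro divide_right_mono) auto
    also have "\<dots> \<le> sin \<bar>dl\<bar>" by (rule sdl)
    finally have "a / (8 * M) \<le> sin \<bar>dl\<bar>" by simp
    moreover have "0 \<le> a / (8 * M)" using a1 M by simp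
    ultimately have "(a / (8 * M))\<^sup>2 \<le> (sin \<bar>dl\<bar>)\<^sup>2" by (intro power_mono) auto
    then show ?thesis unfolding sdsq by (simp add: power_divide power_mult_distrib)
  qed
  have "0 < (lamD N k - r)\<^sup>2 / 2" using Dpos D by simp
  then have X: "0 < (nuT N w e k - pp w e r)\<^sup>2" using den by linarith
  have "(vD N j 1)\<^sup>2 * ((vD N k 1)\<^sup>2 / (nuT N w e k - pp w e r)\<^sup>2) = ((vD N j 1)\<^sup>2 * (vD N k 1)\<^sup>2) / (nuT N w e k - pp w e r)\<^sup>2"
    by simp
  also have "\<dots> \<le> ((vD N j 1)\<^sup>2 * (vD N k 1)\<^sup>2) / ((lamD N k - r)\<^sup>2 / 2)"
  proof (rule divide_left_mono[OF den])
    show "0 \<le> (vD N j 1)\<^sup>2 * (vD N k 1)\<^sup>2" by simp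
    show "0 < (nuT N w e k - pp w e r)\<^sup>2 * ((lamD N k - r)\<^sup>2 / 2)"
      using X \<open>0 < (lamD N k - r)\<^sup>2 / 2\<close> by (rule mult_pos_pos)
  qed
  also have "\<dots> \<le> (16 * ss / M\<^sup>2) / ((lamD N k - r)\<^sup>2 / 2)"
    using num Dpos D by (intro divide_right_mono) auto
  also have "\<dots> = 2 / (M\<^sup>2 * sd)" unfolding D using ssp M by (simp add: field_simps)
  also have "\<dots> \<le> 2 / (M\<^sup>2 * (a\<^sup>2 / (64 * M\<^sup>2)))"
    using sdb a1 M ssp by (intro divide_left_mono mult_left_mono mult_pos_pos) auto
  also have "\<dots> = 128 / a\<^sup>2" using M by (simp add: field_simps)
  also have "\<dots> = 128 / (real k - real j)\<^sup>2" unfolding a_def by simp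
  finally show ?thesis .
qed

lemma root:
  fixes N j :: nat and w e :: real
  assumes N: "1 \<le> N" and j: "j \<in> {1..N}" and w: "0 < w" "w \<le> 1/50"
  shows "\<exists>x. nuT N w e (j - 1) < x \<and> x < nuT N w e j \<and> (\<forall>k\<in>{1..N}. x \<noteq> nuT N w e k)
    \<and> 2 * w * Fs N w e x = 1
    \<and> w * (vD N j 1)\<^sup>2 / 2 \<le> nuT N w e j - x \<and> nuT N w e j - x \<le> 5 * w * (vD N j 1)\<^sup>2
    \<and> (vD N j 1)\<^sup>2 * (\<Sum>k\<in>{1..N} - {j}. (vD N k 1)\<^sup>2 / (nuT N w e k - x)\<^sup>2) \<le> 512"
proof -
  define M where "M = real N + 1"
  define pj where "pj = real j * pi / M"
  define sj where "sj = sin pj"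
  define slo where "slo = w * sj / M"
  define shi where "shi = 4 * w * sj / M"
  define h where "h s = 2 * w * Fs N w e (pp w e (2 - 2 * cos (pj - s)))" for s
  note bj = basic_j[OF N j, folded M_def, folded pj_def, folded sj_def]
  have M: "M \<ge> 2" "M > 0" using bj by auto
  have sj: "0 < sj" "sj \<le> 1" using bj by auto
  have w4: "w < 1/4" using w by simp
  have slo0: "0 < slo" using w sj M by (simp add: slo_def)
  have lohi: "slo \<le> shi" using w sj M unfolding slo_def shi_def by (intro divide_right_mono) auto
  have ws: "w * sj \<le> w" using w sj by (simp add: mult_left_le)
  have shi4: "shi \<le> 4 * w * sj"
  proof -
    have "0 \<le> 4 * w * sj" using w sj by simp
    then have "4 * w * sj * 1 \<le> 4 * w * sj * M" using M by (intro mult_left_mono) auto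
    then show ?thesis unfolding shi_def using M by (simp add: divide_le_eq)
  qed
  have shipi: "shi \<le> pi / (2 * M)"
  proof -
    have "4 * w * sj \<le> pi / 2" using ws w pi_ge_two by linarith
    then show ?thesis unfolding shi_def using M by (simp add: field_simps)
  qed
  have inI: "0 < s \<and> s \<le> pi / (2 * (real N + 1))" if "s \<in> {slo..shi}" for s
    using that slo0 shipi by (auto simp: M_def)
  have nz: "nuT N w e k - pp w e (2 - 2 * cos (pj - s)) \<noteq> 0" if "s \<in> {slo..shi}" "k \<in> {1..N}" for s k
  proof
    assume z: "nuT N w e k - pp w e (2 - 2 * cos (pj - s)) = 0"
    note pf = phi_facts[OF N j conjunct1[OF inI[OF that(1)]] conjunct2[OF inI[OF that(1)]], folded M_def, folded pj_def]
    have "lamD N k = 2 - 2 * cos (pj - s)"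
      using z pp_inj[of "lamD N k" "2 - 2 * cos (pj - s)" w e] lam_range[of N k] pf(3,4) w w4 unfolding nuT_pp by auto
    then show False using pf(5) that(2) by auto
  qed
  have cont: "continuous_on {slo..shi} h"
    unfolding h_def Fs_def pp_def
    using nz unfolding pp_def by (intro continuous_intros) auto
  have hlo: "1 \<le> h slo" unfolding h_def slo_def sj_def pj_def M_def using low_end[OF N j w] by simp
  have hhi: "h shi \<le> 1" unfolding h_def shi_def sj_def pj_def M_def using high_end[OF N j w] by simp
  obtain s where s: "slo \<le> s" "s \<le> shi" "h s = 1" using IVT2'[of h shi 1 slo, OF hhi hlo lohi cont] by auto
  have sI: "s \<in> {slo..shi}" using s by auto
  define r where "r = 2 - 2 * cos (pj - s)"
  define x where "x = pp w e r"
  note pf = phi_facts[OF N j conjunct1[OF inI[OF sI]] conjunct2[OF inI[OF sI]], folded M_def, folded pj_def, folded r_def]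
  have r04: "0 \<le> r" "r \<le> 4" using pf(3,4) .
  have x1: "nuT N w e (j - 1) < x" unfolding x_def nuT_pp using pf(1) lam_range[of N "j-1"] r04 w w4
    by (intro pp_strict) auto
  have x2: "x < nuT N w e j" unfolding x_def nuT_pp using pf(2) lam_range[of N j] r04 w w4
    by (intro pp_strict) auto
  have x3: "\<forall>k\<in>{1..N}. x \<noteq> nuT N w e k"
  proof
    fix k assume k: "k \<in> {1..N}"
    show "x \<noteq> nuT N w e k" using nz[OF sI k] unfolding x_def r_def by auto
  qed
  have x4: "2 * w * Fs N w e x = 1" using s(3) unfolding h_def x_def r_def .
  define aj where "aj = (vD N j 1)\<^sup>2"
  have aj: "aj = 2 / M * sj\<^sup>2" using bj(4) by (simp add: aj_def)
  define P where "P = sj * s"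
  have s0: "0 < s" using s slo0 by linarith
  have P0: "0 \<le> P" unfolding P_def using sj s0 by simp
  have Plo: "w * aj / 2 \<le> P"
  proof -
    have "w * aj / 2 = sj * slo" unfolding aj slo_def using M by (simp add: field_simps power2_eq_square)
    also have "\<dots> \<le> sj * s" using s sj by (intro mult_left_mono) auto
    finally show ?thesis unfolding P_def .
  qed
  have Phi: "P \<le> 2 * w * aj"
  proof -
    have "sj * s \<le> sj * shi" using s sj by (intro mult_left_mono) auto
    also have "\<dots> = 2 * w * aj" unfolding aj shi_def using M by (simp add: field_simps power2_eq_square)
    finally show ?thesis unfolding P_def .
  qed
  have s4: "s \<le> 4 * w * sj" using s shi4 by linarith
  have s4w: "s \<le> 4 * w" using s4 ws by linarith
  have ss: "s * s \<le> 4 * w * P"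
  proof -
    have "s * s \<le> (4 * w * sj) * s" using s4 s0 by (intro mult_right_mono) auto
    then show ?thesis unfolding P_def by (simp add: mult_ac)
  qed
  have s2small: "s * s \<le> 1/100"
  proof -
    have "s * s \<le> (4 * w) * (4 * w)" using s4w s0 by (intro mult_mono) auto
    also have "\<dots> \<le> (4/50) * (4/50)" using w by (intro mult_mono) auto
    finally show ?thesis by simp
  qed
  define L where "L = lamD N j - r"
  have L: "L = 2 * sj * sin s - 2 * cos pj * (1 - cos s)"
    unfolding L_def r_def lamD_cos M_def[symmetric] pj_def[symmetric] sj_def cos_diff by (simp add: algebra_simps)
  have c1: "0 \<le> 1 - cos s" "1 - cos s \<le> s\<^sup>2 / 2" using cos_ge_quad[of s] by auto
  have c2: "\<bar>2 * cos pj * (1 - cos s)\<bar> \<le> s * s"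
  proof -
    have "\<bar>2 * cos pj * (1 - cos s)\<bar> = 2 * \<bar>cos pj\<bar> * (1 - cos s)" using c1 by (simp add: abs_mult)
    also have "\<dots> \<le> 2 * 1 * (1 - cos s)" using c1 by (intro mult_right_mono mult_left_mono) auto
    also have "\<dots> \<le> s * s" using c1 by (simp add: power2_eq_square)
    finally show ?thesis .
  qed
  have sn: "s * (1 - s\<^sup>2 / 2) \<le> sin s" "sin s \<le> s"
  proof -
    have "s * (1 - s\<^sup>2 / 2) \<le> s * cos s" using cos_ge_quad[of s] s0 by (intro mult_left_mono) auto
    also have "\<dots> \<le> sin s" using s4w w pi_ge_two s0 by (intro sin_ge_xcos) auto
    finally show "s * (1 - s\<^sup>2 / 2) \<le> sin s" .
    show "sin s \<le> s" using s0 by (simp add: sin_x_le_x)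
  qed
  have Lhi: "L \<le> P * (2 + 4 * w)"
  proof -
    have "2 * sj * sin s \<le> 2 * sj * s" using sn(2) sj by (intro mult_left_mono) auto
    then have "L \<le> 2 * P + s * s" unfolding L P_def using c2 by (simp add: abs_le_iff mult_ac; linarith)
    then show ?thesis using ss by (simp add: algebra_simps)
  qed
  have Llo: "191 / 100 * P \<le> L"
  proof -
    have "2 * sj * (s * (1 - s\<^sup>2 / 2)) \<le> 2 * sj * sin s" using sn(1) sj by (intro mult_left_mono) auto
    moreover have "2 * sj * (s * (1 - s\<^sup>2 / 2)) = 2 * P - P * (s * s)" unfolding P_def by (simp add: algebra_simps power2_eq_square)
    moreover have "P * (s * s) \<le> P * (1/100)" using s2small P0 by (intro mult_left_mono) auto
    ultimately have "2 * P - P / 100 \<le> 2 * sj * sin s" by simp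
    moreover have "- (s * s) \<le> - (2 * cos pj * (1 - cos s))" using c2 by (simp add: abs_le_iff)
    ultimately have "2 * P - P / 100 - s * s \<le> L" unfolding L by linarith
    moreover have "s * s \<le> 8 / 100 * P"
    proof -
      have "4 * w * P \<le> 4 * (1/50) * P" using w P0 by (intro mult_right_mono) auto
      moreover have "4 * (1/50) * P = 8 / 100 * P" by simp
      ultimately show ?thesis using ss by linarith
    qed
    ultimately show ?thesis by linarith
  qed
  define Q where "Q = 1 + 4 * w - w * (r + lamD N j)"
  have Qb: "1 - 4 * w \<le> Q" "Q \<le> 1 + 4 * w"
  proof -
    have "0 \<le> w * (r + lamD N j)" "w * (r + lamD N j) \<le> w * 8" using w r04 lam_range[of N j] by (auto intro: mult_left_mono)
    then show "1 - 4 * w \<le> Q" "Q \<le> 1 + 4 * w" unfolding Q_def by linarith+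
  qed
  have dQ: "nuT N w e j - x = L * Q" unfolding x_def nuT_pp L_def Q_def using pp_diff[of w e "lamD N j" r] by simp
  have d1: "w * aj / 2 \<le> nuT N w e j - x"
  proof -
    have "191 / 100 * P * (1 - 4 * w) \<le> L * Q" using Llo Qb P0 w by (intro mult_mono) auto
    moreover have "P \<le> 191 / 100 * P * (1 - 4 * w)"
    proof -
      have "1 \<le> 191 / 100 * (1 - 4 * w)" using w by simp
      then have "P * 1 \<le> P * (191 / 100 * (1 - 4 * w))" using P0 by (intro mult_left_mono) auto
      then show ?thesis by (simp add: mult_ac)
    qed
    ultimately show ?thesis unfolding dQ using Plo by linarith
  qed
  have d2: "nuT N w e j - x \<le> 5 * w * aj"
  proof -
    have L0: "0 \<le> L" using Llo P0 by linarith
    have "0 \<le> Q" using Qb w by linarith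
    then have "L * Q \<le> P * (2 + 4 * w) * (1 + 4 * w)" using Lhi Qb L0 by (intro mult_mono) auto
    also have "\<dots> \<le> P * (5 / 2)"
    proof -
      have "(2 + 4 * w) * (1 + 4 * w) \<le> (2 + 4 * (1/50)) * (1 + 4 * (1/50))" using w by (intro mult_mono) auto
      then have "(2 + 4 * w) * (1 + 4 * w) \<le> 5 / 2" by simp
      then have "P * ((2 + 4 * w) * (1 + 4 * w)) \<le> P * (5 / 2)" using P0 by (intro mult_left_mono) auto
      then show ?thesis by (simp add: mult_ac)
    qed
    also have "\<dots> \<le> 2 * w * aj * (5 / 2)" using Phi by (intro mult_right_mono) auto
    finally show ?thesis unfolding dQ by (simp add: mult_ac)
  qed
  have sphi: "sin pj / 2 \<le> sin (pj - s)"
  proof -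
    have "sj * (1 - 6 * w) \<le> sin (pj - s)"
      using sinphi(1)[of pj s w] sj s0 s4 w s4w unfolding sj_def by simp
    moreover have "sj / 2 \<le> sj * (1 - 6 * w)" using sj w by simp
    ultimately show ?thesis unfolding sj_def by linarith
  qed
  have rest: "aj * (\<Sum>k\<in>{1..N} - {j}. (vD N k 1)\<^sup>2 / (nuT N w e k - x)\<^sup>2) \<le> 512"
  proof -
    have "aj * (\<Sum>k\<in>{1..N} - {j}. (vD N k 1)\<^sup>2 / (nuT N w e k - x)\<^sup>2)
        = (\<Sum>k\<in>{1..N} - {j}. aj * ((vD N k 1)\<^sup>2 / (nuT N w e k - x)\<^sup>2))" by (simp add: sum_distrib_left)
    also have "\<dots> \<le> (\<Sum>k\<in>{1..N} - {j}. 128 * (1 / (real k - real j)\<^sup>2))"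
    proof (rule sum_mono)
      fix k assume k: "k \<in> {1..N} - {j}"
      show "aj * ((vD N k 1)\<^sup>2 / (nuT N w e k - x)\<^sup>2) \<le> 128 * (1 / (real k - real j)\<^sup>2)"
        using rest_term[OF N j _ _ conjunct1[OF inI[OF sI]] conjunct2[OF inI[OF sI]] w, of k e] k sphi
        unfolding aj_def x_def r_def M_def pj_def by simp
    qed
    also have "\<dots> = 128 * (\<Sum>k\<in>{1..N} - {j}. 1 / (real k - real j)\<^sup>2)" by (simp add: sum_distrib_left)
    also have "\<dots> \<le> 128 * 4" using inv_sq_sum_off[OF j] by (intro mult_left_mono) auto
    finally show ?thesis by simp
  qed
  show ?thesis using x1 x2 x3 x4 d1 d2 rest unfolding aj_def by blast
qed

lemma Fs_strict:
  assumes N: "1 \<le> N" and xy: "x < y" and sep: "\<forall>k\<in>{1..N}. nuT N w e k < x \<or> y < nuT N w e k"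
  shows "Fs N w e x < Fs N w e y"
  unfolding Fs_def
proof (rule sum_strict_mono)
  show "finite {1..N}" by simp
  show "{1..N} \<noteq> {}" using N by simp
  fix k assume k: "k \<in> {1..N}"
  have a: "0 < (vD N k 1)\<^sup>2" using vD1_pos[OF k] by simp
  have "0 < (nuT N w e k - x) * (nuT N w e k - y)"
  proof (cases "nuT N w e k < x")
    case True
    then show ?thesis using xy by (intro mult_neg_neg) auto
  next
    case False
    then have "y < nuT N w e k" using sep k by auto
    then show ?thesis using xy by (intro mult_pos_pos) auto
  qed
  moreover have "nuT N w e k - y < nuT N w e k - x" using xy by simp
  ultimately show "(vD N k 1)\<^sup>2 / (nuT N w e k - x) < (vD N k 1)\<^sup>2 / (nuT N w e k - y)"
    using a by (intro divide_strict_left_mono) auto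
qed

lemma locate:
  assumes N: "1 \<le> N" and w: "0 < w" "w < 1/4"
    and Xi: "\<forall>j\<in>{1..N}. nuT N w e (j - 1) < xi j \<and> xi j < nuT N w e j \<and> 2 * w * Fs N w e (xi j) = 1"
    and xne: "\<forall>k\<in>{1..N}. x \<noteq> nuT N w e k" and xs: "2 * w * Fs N w e x = 1"
  shows "\<exists>j\<in>{1..N}. x = xi j"
proof -
  define K where "K = {k\<in>{1..N}. x < nuT N w e k}"
  have K: "K \<noteq> {}"
  proof
    assume "K = {}"
    then have lt: "nuT N w e k < x" if "k \<in> {1..N}" for k using xne that unfolding K_def by force
    have "Fs N w e x \<le> 0" unfolding Fs_def
    proof (rule sum_nonpos)
      fix k assume "k \<in> {1..N}"
      then show "(vD N k 1)\<^sup>2 / (nuT N w e k - x) \<le> 0" using lt by (simp add: divide_nonneg_neg less_imp_le)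
    qed
    then show False using xs w by (smt (verit) mult_pos_pos mult_nonneg_nonpos)
  qed
  define j where "j = Min K"
  have fK: "finite K" unfolding K_def by simp
  have jK: "j \<in> K" unfolding j_def using Min_in[OF fK K] .
  then have j: "j \<in> {1..N}" "x < nuT N w e j" unfolding K_def by auto
  have below: "nuT N w e k < x" if "k \<in> {1..N}" "k < j" for k
  proof -
    have "k \<notin> K" using that Min_le[OF fK] unfolding j_def by force
    then show ?thesis using that xne unfolding K_def by force
  qed
  have xij: "nuT N w e (j - 1) < xi j" "xi j < nuT N w e j" "2 * w * Fs N w e (xi j) = 1" using Xi j(1) by auto
  have sep: "nuT N w e k < min x (xi j) \<or> max x (xi j) < nuT N w e k" if k: "k \<in> {1..N}" for k
  proof (cases "k < j")
    case True
    have "nuT N w e k \<le> nuT N w e (j - 1)"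
    proof (cases "k = j - 1")
      case False
      then have "k < j - 1" using True by linarith
      moreover have "j - 1 \<le> N" using j by auto
      ultimately show ?thesis using nu_strict[of k "j-1" N w e] w by simp
    qed simp
    then show ?thesis using below[OF k True] xij by simp
  next
    case False
    then have "nuT N w e j \<le> nuT N w e k" using nu_strict[of j k N w e] w k by (cases "k = j") auto
    then show ?thesis using j xij by simp
  qed
  have "x = xi j"
  proof (rule ccontr)
    assume ne: "x \<noteq> xi j"
    show False
    proof (cases "x < xi j")
      case True
      have "Fs N w e x < Fs N w e (xi j)" using Fs_strict[OF N True] sep True by fastforce
      moreover have "2 * w * Fs N w e x = 2 * w * Fs N w e (xi j)" using xs xij(3) by simp
      then have "Fs N w e x = Fs N w e (xi j)" using w by simp
      ultimately show False by simp
    next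
      case False
      then have lt: "xi j < x" using ne by simp
      have "Fs N w e (xi j) < Fs N w e x" using Fs_strict[OF N lt] sep lt by fastforce
      moreover have "2 * w * Fs N w e x = 2 * w * Fs N w e (xi j)" using xs xij(3) by simp
      then have "Fs N w e x = Fs N w e (xi j)" using w by simp
      ultimately show False by simp
    qed
  qed
  then show ?thesis using j(1) by blast
qed

lemma main_fixed:
  fixes N :: nat and \<eta> \<omega> c C :: real
  assumes N: "N \<ge> 1" and eta: "\<eta> \<ge> 0" and w: "0 < \<omega>" "\<omega> < 1/50" and cC: "c = 1/20" "C = 7"
  shows "(\<forall>j\<in>{1..N}.
          eigenvector (Amat N \<omega> \<eta>) (stackv (vvec N j) (- (\<i> * sqrt (nuT N \<omega> \<eta> j)))) (\<i> * sqrt (nuT N \<omega> \<eta> j))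
        \<and> eigenvector (Amat N \<omega> \<eta>) (stackv (vvec N j) (\<i> * sqrt (nuT N \<omega> \<eta> j))) (- (\<i> * sqrt (nuT N \<omega> \<eta> j))))
      \<and> (\<exists>\<xi> :: nat \<Rightarrow> real.
          (\<forall>x. eigenvalue (Tom N \<omega> \<eta> + Pmat N \<omega>) x \<longleftrightarrow> (\<exists>j\<in>{1..N}. x = \<xi> j))
        \<and> (\<forall>j\<in>{1..N}. \<xi> j < nuT N \<omega> \<eta> j)
        \<and> (\<forall>j\<in>{1..<N}. nuT N \<omega> \<eta> j < \<xi> (j + 1))
        \<and> (\<forall>j\<in>{1..N}.
              c * \<omega> * (vD N j 1)\<^sup>2 \<le> \<bar>\<xi> j - nuT N \<omega> \<eta> j\<bar>
            \<and> \<bar>\<xi> j - nuT N \<omega> \<eta> j\<bar> \<le> C * \<omega> * (vD N j 1)\<^sup>2)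
        \<and> (\<forall>j\<in>{1..N}. eigenvector (Tom N \<omega> \<eta> + Pmat N \<omega>) (wvec N \<omega> \<eta> (\<xi> j)) (\<xi> j))
        \<and> (\<forall>j\<in>{1..N}.
              c * (vD N j 1)\<^sup>2 \<le> (wvec N \<omega> \<eta> (\<xi> j) $ 0)\<^sup>2
            \<and> (wvec N \<omega> \<eta> (\<xi> j) $ 0)\<^sup>2 \<le> C * (vD N j 1)\<^sup>2)
        \<and> (\<forall>z. eigenvalue (Aom N \<omega> \<eta>) z \<longleftrightarrow>
              (\<exists>j\<in>{1..N}. z = \<i> * sqrt (\<xi> j) \<or> z = - (\<i> * sqrt (\<xi> j))))
        \<and> (\<forall>j\<in>{1..N}.
              eigenvector (Aom N \<omega> \<eta>) (stackv (wvec N \<omega> \<eta> (\<xi> j)) (- (\<i> * sqrt (\<xi> j)))) (\<i> * sqrt (\<xi> j))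
            \<and> eigenvector (Aom N \<omega> \<eta>) (stackv (wvec N \<omega> \<eta> (\<xi> j)) (\<i> * sqrt (\<xi> j))) (- (\<i> * sqrt (\<xi> j)))))"
proof -
  have w4: "\<omega> < 1/4" and w50: "\<omega> \<le> 1/50" using w by auto
  have A: "\<forall>j\<in>{1..N}.
          eigenvector (Amat N \<omega> \<eta>) (stackv (vvec N j) (- (\<i> * sqrt (nuT N \<omega> \<eta> j)))) (\<i> * sqrt (nuT N \<omega> \<eta> j))
        \<and> eigenvector (Amat N \<omega> \<eta>) (stackv (vvec N j) (\<i> * sqrt (nuT N \<omega> \<eta> j))) (- (\<i> * sqrt (nuT N \<omega> \<eta> j)))"
  proof
    fix j assume j: "j \<in> {1..N}"
    have v0: "vvec N j \<noteq> 0\<^sub>v N"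
    proof
      assume "vvec N j = 0\<^sub>v N"
      then have "vvec N j $ 0 = 0" using N by simp
      then show False using vD1_pos[OF j] N by (simp add: vvec_def)
    qed
    have nu0: "0 \<le> nuT N \<omega> \<eta> j" using nu_ge[of \<omega> j N \<eta>] w w4 j eta by auto
    show "eigenvector (Amat N \<omega> \<eta>) (stackv (vvec N j) (- (\<i> * sqrt (nuT N \<omega> \<eta> j)))) (\<i> * sqrt (nuT N \<omega> \<eta> j))
        \<and> eigenvector (Amat N \<omega> \<eta>) (stackv (vvec N j) (\<i> * sqrt (nuT N \<omega> \<eta> j))) (- (\<i> * sqrt (nuT N \<omega> \<eta> j)))"
      unfolding Amat_B by (rule block_eig[OF Tom_carrier vvec_carrier v0 Tom_vvec nu0])
  qed
  define P where "P j x \<longleftrightarrow> (nuT N \<omega> \<eta> (j - 1) < x \<and> x < nuT N \<omega> \<eta> j \<and> (\<forall>k\<in>{1..N}. x \<noteq> nuT N \<omega> \<eta> k)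
    \<and> 2 * \<omega> * Fs N \<omega> \<eta> x = 1
    \<and> \<omega> * (vD N j 1)\<^sup>2 / 2 \<le> nuT N \<omega> \<eta> j - x \<and> nuT N \<omega> \<eta> j - x \<le> 5 * \<omega> * (vD N j 1)\<^sup>2
    \<and> (vD N j 1)\<^sup>2 * (\<Sum>k\<in>{1..N} - {j}. (vD N k 1)\<^sup>2 / (nuT N \<omega> \<eta> k - x)\<^sup>2) \<le> 512)" for j x
  define \<xi> where "\<xi> j = (SOME x. P j x)" for j
  have P\<xi>: "P j (\<xi> j)" if j: "j \<in> {1..N}" for j
  proof -
    have "\<exists>x. P j x" unfolding P_def by (rule root[OF N j w(1) w50])
    then show ?thesis unfolding \<xi>_def by (rule someI_ex)
  qed
  have Xi: "\<forall>j\<in>{1..N}. nuT N \<omega> \<eta> (j - 1) < \<xi> j \<and> \<xi> j < nuT N \<omega> \<eta> j \<and> 2 * \<omega> * Fs N \<omega> \<eta> (\<xi> j) = 1"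
    using P\<xi> unfolding P_def by blast
  have xipos: "0 < \<xi> j" if j: "j \<in> {1..N}" for j
  proof -
    have "\<eta> \<le> nuT N \<omega> \<eta> (j - 1)" using nu_ge[of \<omega> "j - 1" N \<eta>] w w4 j by auto
    then show ?thesis using Xi j eta by fastforce
  qed
  have xine: "\<forall>k\<in>{1..N}. \<xi> j \<noteq> nuT N \<omega> \<eta> k" if j: "j \<in> {1..N}" for j
    using P\<xi>[OF j] unfolding P_def by blast
  have xisec: "2 * \<omega> * (\<Sum>k=1..N. (vD N k 1)\<^sup>2 / (nuT N \<omega> \<eta> k - \<xi> j)) = 1" if j: "j \<in> {1..N}" for j
    using P\<xi>[OF j] unfolding P_def Fs_def by blast
  have E5: "\<forall>j\<in>{1..N}. eigenvector (Tom N \<omega> \<eta> + Pmat N \<omega>) (wvec N \<omega> \<eta> (\<xi> j)) (\<xi> j)"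
    using wvec_eig(1)[OF N w(1) w4 xine xisec] by blast
  have E1: "\<forall>x. eigenvalue (Tom N \<omega> \<eta> + Pmat N \<omega>) x \<longleftrightarrow> (\<exists>j\<in>{1..N}. x = \<xi> j)"
  proof (intro allI iffI)
    fix x assume ev: "eigenvalue (Tom N \<omega> \<eta> + Pmat N \<omega>) x"
    from real_secular[OF N w(1) w4 ev] show "\<exists>j\<in>{1..N}. x = \<xi> j"
      using locate[OF N w(1) w4 Xi] unfolding Fs_def by blast
  next
    fix x assume "\<exists>j\<in>{1..N}. x = \<xi> j"
    then show "eigenvalue (Tom N \<omega> \<eta> + Pmat N \<omega>) x" using E5 unfolding eigenvalue_def by blast
  qed
  have E2: "\<forall>j\<in>{1..N}. \<xi> j < nuT N \<omega> \<eta> j" using Xi by blast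
  have E3: "\<forall>j\<in>{1..<N}. nuT N \<omega> \<eta> j < \<xi> (j + 1)"
  proof
    fix j assume "j \<in> {1..<N}"
    then have "j + 1 \<in> {1..N}" by auto
    then show "nuT N \<omega> \<eta> j < \<xi> (j + 1)" using Xi by fastforce
  qed
  have E4: "\<forall>j\<in>{1..N}.
              c * \<omega> * (vD N j 1)\<^sup>2 \<le> \<bar>\<xi> j - nuT N \<omega> \<eta> j\<bar>
            \<and> \<bar>\<xi> j - nuT N \<omega> \<eta> j\<bar> \<le> C * \<omega> * (vD N j 1)\<^sup>2"
  proof
    fix j assume j: "j \<in> {1..N}"
    have b: "\<omega> * (vD N j 1)\<^sup>2 / 2 \<le> nuT N \<omega> \<eta> j - \<xi> j" "nuT N \<omega> \<eta> j - \<xi> j \<le> 5 * \<omega> * (vD N j 1)\<^sup>2"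
      using P\<xi>[OF j] unfolding P_def by auto
    have "\<xi> j < nuT N \<omega> \<eta> j" using Xi j by blast
    then have ab: "\<bar>\<xi> j - nuT N \<omega> \<eta> j\<bar> = nuT N \<omega> \<eta> j - \<xi> j" by simp
    have a0: "0 \<le> \<omega> * (vD N j 1)\<^sup>2" using w by simp
    show "c * \<omega> * (vD N j 1)\<^sup>2 \<le> \<bar>\<xi> j - nuT N \<omega> \<eta> j\<bar> \<and> \<bar>\<xi> j - nuT N \<omega> \<eta> j\<bar> \<le> C * \<omega> * (vD N j 1)\<^sup>2"
      unfolding ab cC using b a0 by (simp add: mult.assoc) 
  qed
  have E6: "\<forall>j\<in>{1..N}.
              c * (vD N j 1)\<^sup>2 \<le> (wvec N \<omega> \<eta> (\<xi> j) $ 0)\<^sup>2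
            \<and> (wvec N \<omega> \<eta> (\<xi> j) $ 0)\<^sup>2 \<le> C * (vD N j 1)\<^sup>2"
  proof
    fix j assume j: "j \<in> {1..N}"
    define x where "x = \<xi> j"
    define a where "a = (vD N j 1)\<^sup>2"
    define d where "d = nuT N \<omega> \<eta> j - x"
    define R where "R = (\<Sum>k\<in>{1..N} - {j}. (vD N k 1)\<^sup>2 / (nuT N \<omega> \<eta> k - x)\<^sup>2)"
    define S2 where "S2 = (\<Sum>k=1..N. (vD N k 1)\<^sup>2 / (nuT N \<omega> \<eta> k - x)\<^sup>2)"
    have b: "\<omega> * a / 2 \<le> d" "d \<le> 5 * \<omega> * a" "a * R \<le> 512"
      using P\<xi>[OF j] unfolding P_def a_def d_def R_def x_def by auto
    have a0: "0 < a" using vD1_pos[OF j] by (simp add: a_def)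
    have d0: "0 < d" using b(1) a0 w by (smt (verit) divide_pos_pos mult_pos_pos)
    have R0: "0 \<le> R" unfolding R_def by (intro sum_nonneg) auto
    have S2: "S2 = a / d\<^sup>2 + R" unfolding S2_def R_def a_def d_def
      using sum.remove[of "{1..N}" j "\<lambda>k. (vD N k 1)\<^sup>2 / (nuT N \<omega> \<eta> k - x)\<^sup>2"] j by simp
    have S2pos: "0 < S2" unfolding S2 using a0 d0 R0 by (simp add: add_pos_nonneg)
    have w0: "wvec N \<omega> \<eta> x $ 0 = 1 / (2 * \<omega>) / sqrt S2"
      unfolding S2_def x_def by (rule wvec_eig(2)[OF N w(1) w4 xine[OF j] xisec[OF j]])
    define t where "t = 4 * \<omega>\<^sup>2 * S2"
    have t0: "0 < t" unfolding t_def using S2pos w by simp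
    have w0sq: "(wvec N \<omega> \<eta> x $ 0)\<^sup>2 = 1 / t"
      unfolding w0 t_def using S2pos w by (simp add: power_divide power_mult_distrib)
    define u where "u = \<omega> * a / d"
    have u: "1/5 \<le> u" "u \<le> 2"
    proof -
      show "u \<le> 2" unfolding u_def using b(1) d0 by (simp add: divide_le_eq)
      show "1/5 \<le> u" unfolding u_def using b(2) d0 by (simp add: le_divide_eq)
    qed
    have at: "a * t = 4 * u\<^sup>2 + 4 * \<omega>\<^sup>2 * (a * R)"
      unfolding t_def S2 u_def using d0 by (simp add: field_simps power2_eq_square)
    have usq: "1/25 \<le> u\<^sup>2" "u\<^sup>2 \<le> 4"
    proof -
      have "(1/5)\<^sup>2 \<le> u\<^sup>2" using u by (intro power_mono) auto
      then show "1/25 \<le> u\<^sup>2" by (simp add: power2_eq_square)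
      have "u\<^sup>2 \<le> 2\<^sup>2" using u by (intro power_mono) auto
      then show "u\<^sup>2 \<le> 4" by simp
    qed
    have wsq: "\<omega>\<^sup>2 \<le> 1/2500"
    proof -
      have "\<omega>\<^sup>2 \<le> (1/50)\<^sup>2" using w by (intro power_mono) auto
      then show ?thesis by (simp add: power2_eq_square)
    qed
    have aR: "0 \<le> a * R" using a0 R0 by simp
    have "4 * \<omega>\<^sup>2 * (a * R) \<le> 4 * (1/2500) * 512" using wsq b(3) aR by (intro mult_mono) auto
    moreover have "0 \<le> 4 * \<omega>\<^sup>2 * (a * R)" using aR by simp
    ultimately have at_hi: "a * t \<le> 20" and at_lo: "4/25 \<le> a * t" using at usq by linarith+
    have lo: "c * a \<le> 1 / t"
    proof -
      have "c * a * t \<le> 1" unfolding cC using at_hi by (simp add: mult.assoc)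
      then show ?thesis using t0 by (simp add: le_divide_eq)
    qed
    have hi: "1 / t \<le> C * a"
    proof -
      have "1 \<le> C * a * t" unfolding cC using at_lo by (simp add: mult.assoc)
      then show ?thesis using t0 by (simp add: divide_le_eq)
    qed
    show "c * (vD N j 1)\<^sup>2 \<le> (wvec N \<omega> \<eta> (\<xi> j) $ 0)\<^sup>2 \<and> (wvec N \<omega> \<eta> (\<xi> j) $ 0)\<^sup>2 \<le> C * (vD N j 1)\<^sup>2"
      using lo hi w0sq unfolding a_def x_def by simp
  qed
  have TPc: "Tom N \<omega> \<eta> + Pmat N \<omega> \<in> carrier_mat N N" by simp
  have E8: "\<forall>j\<in>{1..N}.
              eigenvector (Aom N \<omega> \<eta>) (stackv (wvec N \<omega> \<eta> (\<xi> j)) (- (\<i> * sqrt (\<xi> j)))) (\<i> * sqrt (\<xi> j))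
            \<and> eigenvector (Aom N \<omega> \<eta>) (stackv (wvec N \<omega> \<eta> (\<xi> j)) (\<i> * sqrt (\<xi> j))) (- (\<i> * sqrt (\<xi> j)))"
  proof
    fix j assume j: "j \<in> {1..N}"
    have e: "eigenvector (Tom N \<omega> \<eta> + Pmat N \<omega>) (wvec N \<omega> \<eta> (\<xi> j)) (\<xi> j)" using E5 j by blast
    then have ne: "wvec N \<omega> \<eta> (\<xi> j) \<noteq> 0\<^sub>v N" and mv: "(Tom N \<omega> \<eta> + Pmat N \<omega>) *\<^sub>v wvec N \<omega> \<eta> (\<xi> j) = \<xi> j \<cdot>\<^sub>v wvec N \<omega> \<eta> (\<xi> j)"
      unfolding eigenvector_def by auto
    have x0: "0 \<le> \<xi> j" using xipos[OF j] by simp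
    show "eigenvector (Aom N \<omega> \<eta>) (stackv (wvec N \<omega> \<eta> (\<xi> j)) (- (\<i> * sqrt (\<xi> j)))) (\<i> * sqrt (\<xi> j))
            \<and> eigenvector (Aom N \<omega> \<eta>) (stackv (wvec N \<omega> \<eta> (\<xi> j)) (\<i> * sqrt (\<xi> j))) (- (\<i> * sqrt (\<xi> j)))"
      unfolding Aom_B by (rule block_eig[OF TPc wvec_carrier ne mv x0])
  qed
  have E7: "\<forall>z. eigenvalue (Aom N \<omega> \<eta>) z \<longleftrightarrow>
              (\<exists>j\<in>{1..N}. z = \<i> * sqrt (\<xi> j) \<or> z = - (\<i> * sqrt (\<xi> j)))"
  proof (intro allI iffI)
    fix z assume ev: "eigenvalue (Aom N \<omega> \<eta>) z"
    have "eigenvalue (map_mat complex_of_real (Tom N \<omega> \<eta> + Pmat N \<omega>)) (- (z * z))"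
      using block_eigval[OF TPc] ev unfolding Aom_B by blast
    then obtain u where "eigenvector (map_mat complex_of_real (Tom N \<omega> \<eta> + Pmat N \<omega>)) u (- (z * z))"
      unfolding eigenvalue_def by blast
    note sc = secular_C[OF N w(1) w4 this]
    define r where "r = Re (- (z * z))"
    have zr: "- (z * z) = complex_of_real r" using sc unfolding r_def by simp
    obtain j where j: "j \<in> {1..N}" "r = \<xi> j"
      using locate[OF N w(1) w4 Xi] sc unfolding r_def Fs_def by blast
    have x0: "0 \<le> \<xi> j" using xipos[OF j(1)] by simp
    define q where "q = complex_of_real (sqrt (\<xi> j))"
    have qq: "q * q = complex_of_real (\<xi> j)" unfolding q_def using x0 by (simp flip: of_real_mult)
    have "(z - \<i> * q) * (z + \<i> * q) = z * z + q * q" by (simp add: algebra_simps)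
    also have "\<dots> = 0"
    proof -
      have "z * z = - complex_of_real (\<xi> j)" using zr j(2) by (metis minus_minus)
      then show ?thesis using qq by simp
    qed
    finally have "z = \<i> * q \<or> z = - (\<i> * q)" by (simp add: eq_neg_iff_add_eq_0)
    then show "\<exists>j\<in>{1..N}. z = \<i> * sqrt (\<xi> j) \<or> z = - (\<i> * sqrt (\<xi> j))" using j(1) unfolding q_def by blast
  next
    fix z assume "\<exists>j\<in>{1..N}. z = \<i> * sqrt (\<xi> j) \<or> z = - (\<i> * sqrt (\<xi> j))"
    then show "eigenvalue (Aom N \<omega> \<eta>) z" using E8 unfolding eigenvalue_def by blast
  qed
  show ?thesis using A E1 E2 E3 E4 E5 E6 E7 E8 by blast
qed

theorem theorem3p6:
  shows "\<exists>\<omega>0 > 0. \<exists>c C. 0 < c \<and> 0 < C \<and>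
    (\<forall>N \<ge> 1. \<forall>\<eta> \<ge> 0. \<forall>\<omega>. 0 < \<omega> \<and> \<omega> < \<omega>0 \<longrightarrow>
      (\<forall>j\<in>{1..N}.
          eigenvector (Amat N \<omega> \<eta>) (stackv (vvec N j) (- (\<i> * sqrt (nuT N \<omega> \<eta> j)))) (\<i> * sqrt (nuT N \<omega> \<eta> j))
        \<and> eigenvector (Amat N \<omega> \<eta>) (stackv (vvec N j) (\<i> * sqrt (nuT N \<omega> \<eta> j))) (- (\<i> * sqrt (nuT N \<omega> \<eta> j))))
      \<and> (\<exists>\<xi> :: nat \<Rightarrow> real.
          (\<forall>x. eigenvalue (Tom N \<omega> \<eta> + Pmat N \<omega>) x \<longleftrightarrow> (\<exists>j\<in>{1..N}. x = \<xi> j))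
        \<and> (\<forall>j\<in>{1..N}. \<xi> j < nuT N \<omega> \<eta> j)
        \<and> (\<forall>j\<in>{1..<N}. nuT N \<omega> \<eta> j < \<xi> (j + 1))
        \<and> (\<forall>j\<in>{1..N}.
              c * \<omega> * (vD N j 1)\<^sup>2 \<le> \<bar>\<xi> j - nuT N \<omega> \<eta> j\<bar>
            \<and> \<bar>\<xi> j - nuT N \<omega> \<eta> j\<bar> \<le> C * \<omega> * (vD N j 1)\<^sup>2)
        \<and> (\<forall>j\<in>{1..N}. eigenvector (Tom N \<omega> \<eta> + Pmat N \<omega>) (wvec N \<omega> \<eta> (\<xi> j)) (\<xi> j))
        \<and> (\<forall>j\<in>{1..N}.
              c * (vD N j 1)\<^sup>2 \<le> (wvec N \<omega> \<eta> (\<xi> j) $ 0)\<^sup>2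
            \<and> (wvec N \<omega> \<eta> (\<xi> j) $ 0)\<^sup>2 \<le> C * (vD N j 1)\<^sup>2)
        \<and> (\<forall>z. eigenvalue (Aom N \<omega> \<eta>) z \<longleftrightarrow>
              (\<exists>j\<in>{1..N}. z = \<i> * sqrt (\<xi> j) \<or> z = - (\<i> * sqrt (\<xi> j))))
        \<and> (\<forall>j\<in>{1..N}.
              eigenvector (Aom N \<omega> \<eta>) (stackv (wvec N \<omega> \<eta> (\<xi> j)) (- (\<i> * sqrt (\<xi> j)))) (\<i> * sqrt (\<xi> j))
            \<and> eigenvector (Aom N \<omega> \<eta>) (stackv (wvec N \<omega> \<eta> (\<xi> j)) (\<i> * sqrt (\<xi> j))) (- (\<i> * sqrt (\<xi> j))))))"
proof -
  show ?thesis
    apply (rule exI[of _ "1/50"])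
    apply (intro conjI)
     apply simp
    apply (rule exI[of _ "1/20"])
    apply (rule exI[of _ "7"])
    apply (intro conjI)
      apply simp
     apply simp
    apply (intro allI impI)
    apply (rule main_fixed)
    by auto
qed

end
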